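(* (i) Let $\sigma\in\mathbb R^N$ with $\min_{1\le j\le N}\sigma_j>1/2$. Then for all $u,v\in G^{\sigma,0}$, $$\|uv\|_{G^{\sigma,0}}\lesssim\|u\|_{G^{\sigma,0}}\|v\|_{G^{\sigma,0}}.$$ (ii) Let $\sigma_1=0$, $\min_{2\le j\le N}\sigma_j>1/2$ and $\beta>1/4$. Then for all $\hat u,\hat v:\dot{\mathbb Z}^N\to\mathbb C$, $$\Big\|\sum_{k'\in\dot{\mathbb Z}^N,\,k'\neq k}\langle|\alpha\cdot k||\alpha\cdot(k-k')||\alpha\cdot k'|\rangle^{-\beta}|\hat u(k-k')||\hat v(k')|\Big\|_{\hat G^{\sigma,0}_k}\lesssim\|\hat u\|_{\hat G^{\sigma,0}}\|\hat v\|_{\hat G^{\sigma,0}}.$$ The implicit constants depend only on $\sigma,\beta,\alpha,N$.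
   Context: Standing setting: fix $N\in\mathbb N$ and $\alpha\in\mathbb R^N$ with $\alpha\cdot k\neq0$ for all $k\in\dot{\mathbb Z}^N:=\mathbb Z^N\setminus\{0\}$. Write $\langle x\rangle=(1+|x|^2)^{1/2}$. For $\hat f:\dot{\mathbb Z}^N\to\mathbb C$, $$\|\hat f\|_{\hat G^{\sigma,a}}=\Big(\sum_{k\in\dot{\mathbb Z}^N}|\alpha\cdot k|^{2a}\prod_j\langle k_j\rangle^{2\sigma_j}|\hat f(k)|^2\Big)^{1/2},$$ and $\|f\|_{G^{\sigma,a}}=\|\hat f\|_{\hat G^{\sigma,a}}$ for $f=\sum_k\hat f(k)e^{i(\alpha\cdot k)x}$. The product is defined by $\widehat{uv}(k)=\sum_{k'\in\dot{\mathbb Z}^N,\,k'\neq k}\hat u(k-k')\hat v(k')$ for $k\in\dot{\mathbb Z}^N$; the zero mode is discarded. *)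

theory Defs
  imports "HOL-Analysis.Analysis"
begin

text \<open>Lattice points of Z^N are modelled as functions nat => int vanishing
  at indices >= N; coordinate j (1-based in the paper) is index j-1 here.\<close>

definition Zdot :: "nat \<Rightarrow> (nat \<Rightarrow> int) set" where
  "Zdot N = {k. (\<forall>j\<ge>N. k j = 0) \<and> k \<noteq> (\<lambda>_. 0)}"

definition adot :: "nat \<Rightarrow> (nat \<Rightarrow> real) \<Rightarrow> (nat \<Rightarrow> int) \<Rightarrow> real" where
  "adot N \<alpha> k = (\<Sum>j<N. \<alpha> j * of_int (k j))"

definition jbr :: "real \<Rightarrow> real" where
  "jbr x = sqrt (1 + x\<^sup>2)"

definition Gweight :: "nat \<Rightarrow> (nat \<Rightarrow> real) \<Rightarrow> (nat \<Rightarrow> real) \<Rightarrow> real \<Rightarrow> (nat \<Rightarrow> int) \<Rightarrow> real" where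
  "Gweight N \<alpha> \<sigma> a k = \<bar>adot N \<alpha> k\<bar> powr (2 * a) * (\<Prod>j<N. jbr (of_int (k j)) powr (2 * \<sigma> j))"

definition GsqE :: "nat \<Rightarrow> (nat \<Rightarrow> real) \<Rightarrow> (nat \<Rightarrow> real) \<Rightarrow> real \<Rightarrow> ((nat \<Rightarrow> int) \<Rightarrow> ennreal) \<Rightarrow> ennreal" where
  "GsqE N \<alpha> \<sigma> a g = (\<Sum>\<^sub>\<infinity> k\<in>Zdot N. ennreal (Gweight N \<alpha> \<sigma> a k) * (g k)\<^sup>2)"

definition Gsq :: "nat \<Rightarrow> (nat \<Rightarrow> real) \<Rightarrow> (nat \<Rightarrow> real) \<Rightarrow> real \<Rightarrow> ((nat \<Rightarrow> int) \<Rightarrow> complex) \<Rightarrow> ennreal" where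
  "Gsq N \<alpha> \<sigma> a f = GsqE N \<alpha> \<sigma> a (\<lambda>k. ennreal (cmod (f k)))"

text \<open>Fourier coefficients of the product uv (zero mode discarded).\<close>
definition Gprod :: "nat \<Rightarrow> ((nat \<Rightarrow> int) \<Rightarrow> complex) \<Rightarrow> ((nat \<Rightarrow> int) \<Rightarrow> complex) \<Rightarrow> (nat \<Rightarrow> int) \<Rightarrow> complex" where
  "Gprod N u v k = (\<Sum>\<^sub>\<infinity> k'\<in>Zdot N - {k}. u (k - k') * v k')"

end

theory Submission
  imports Defs
begin


lemma esum[simp]: fixes f :: "'a \<Rightarrow> ennreal" shows "f summable_on A"
  by (simp add: nonneg_summable_on_complete)

lemma einf_mono:
  fixes f g :: "'a \<Rightarrow> ennreal"
  assumes "\<And>x. x \<in> A \<Longrightarrow> f x \<le> g x"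
  shows "infsum f A \<le> infsum g A"
  using assms by (intro infsum_mono) auto

lemma einf_subset:
  fixes f :: "'a \<Rightarrow> ennreal"
  assumes "A \<subseteq> B"
  shows "infsum f A \<le> infsum f B"
  using assms by (intro infsum_mono_neutral) auto

lemma einf_mono_neutral:
  fixes f g :: "'a \<Rightarrow> ennreal"
  assumes "A \<subseteq> B" "\<And>x. x \<in> A \<Longrightarrow> f x \<le> g x"
  shows "infsum f A \<le> infsum g B"
  using assms by (intro infsum_mono_neutral) auto

lemma einf_cmult_right:
  fixes f :: "'a \<Rightarrow> ennreal"
  shows "infsum (\<lambda>x. c * f x) A = c * infsum f A"
  by (simp add: nonneg_infsum_complete sum_distrib_left SUP_mult_left_ennreal)

lemma einf_cmult_left:
  fixes f :: "'a \<Rightarrow> ennreal"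
  shows "infsum (\<lambda>x. f x * c) A = infsum f A * c"
  using einf_cmult_right[of c f A] by (simp add: mult.commute)

lemma einf_finite_le:
  fixes f :: "'a \<Rightarrow> ennreal"
  assumes "finite F" "F \<subseteq> A"
  shows "sum f F \<le> infsum f A"
proof -
  have "sum f F = infsum f F" using assms by simp
  also have "\<dots> \<le> infsum f A" by (rule einf_subset[OF assms(2)])
  finally show ?thesis .
qed

lemma einf_Sigma_finite:
  fixes f :: "'a \<times> 'b \<Rightarrow> ennreal"
  assumes "finite G"
  shows "(\<Sum>x\<in>G. infsum (\<lambda>y. f (x,y)) (B x)) = infsum f (Sigma G B)"
  using assms
proof (induction G rule: finite_induct)
  case empty
  then show ?case by simp
next
  case (insert x G)
  have eq: "Sigma (insert x G) B = Pair x ` B x \<union> Sigma G B" by auto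
  have dj: "Pair x ` B x \<inter> Sigma G B = {}" using insert by auto
  have "infsum f (Sigma (insert x G) B) = infsum f (Pair x ` B x) + infsum f (Sigma G B)"
    unfolding eq by (rule infsum_Un_disjoint) (use dj in auto)
  also have "infsum f (Pair x ` B x) = infsum (\<lambda>y. f (x,y)) (B x)"
    by (subst infsum_reindex) (auto simp: inj_on_def o_def)
  finally show ?case using insert by simp
qed

lemma einf_Sigma:
  fixes f :: "'a \<times> 'b \<Rightarrow> ennreal"
  shows "infsum f (Sigma A B) = infsum (\<lambda>x. infsum (\<lambda>y. f (x,y)) (B x)) A"
proof (rule antisym)
  show "infsum f (Sigma A B) \<le> infsum (\<lambda>x. infsum (\<lambda>y. f (x,y)) (B x)) A"
  proof (subst nonneg_infsum_complete, simp, rule SUP_least, clarify)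
    fix F assume F: "finite F" "F \<subseteq> Sigma A B"
    have "sum f F \<le> infsum f (Sigma (fst ` F) B)"
      using F by (intro einf_finite_le) force+
    also have "\<dots> = (\<Sum>x\<in>fst ` F. infsum (\<lambda>y. f (x,y)) (B x))"
      using F by (simp add: einf_Sigma_finite)
    also have "\<dots> \<le> infsum (\<lambda>x. infsum (\<lambda>y. f (x,y)) (B x)) A"
      using F by (intro einf_finite_le) auto
    finally show "sum f F \<le> infsum (\<lambda>x. infsum (\<lambda>y. f (x,y)) (B x)) A" .
  qed
next
  show "infsum (\<lambda>x. infsum (\<lambda>y. f (x,y)) (B x)) A \<le> infsum f (Sigma A B)"
  proof (subst nonneg_infsum_complete, simp, rule SUP_least, clarify)
    fix G assume G: "finite G" "G \<subseteq> A"
    have "(\<Sum>x\<in>G. infsum (\<lambda>y. f (x,y)) (B x)) = infsum f (Sigma G B)"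
      using G by (simp add: einf_Sigma_finite)
    also have "\<dots> \<le> infsum f (Sigma A B)"
      using G by (intro einf_subset) auto
    finally show "(\<Sum>x\<in>G. infsum (\<lambda>y. f (x,y)) (B x)) \<le> infsum f (Sigma A B)" .
  qed
qed

lemma einf_prod:
  fixes f :: "'a \<Rightarrow> ennreal" and g :: "'b \<Rightarrow> ennreal"
  shows "infsum (\<lambda>(x,y). f x * g y) (A \<times> B) = infsum f A * infsum g B"
  by (simp add: einf_Sigma einf_cmult_right einf_cmult_left)

lemma ecs_finite:
  fixes f g :: "'a \<Rightarrow> ennreal"
  assumes "finite F"
  shows "(\<Sum>x\<in>F. f x * g x)\<^sup>2 \<le> (\<Sum>x\<in>F. (f x)\<^sup>2) * (\<Sum>x\<in>F. (g x)\<^sup>2)"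
proof -
  have "(\<integral>\<^sup>+x. f x * g x \<partial>count_space F)\<^sup>2 \<le> (\<integral>\<^sup>+x. f x ^ 2 \<partial>count_space F) * (\<integral>\<^sup>+x. g x ^ 2 \<partial>count_space F)"
    by (rule Cauchy_Schwarz_nn_integral) auto
  then show ?thesis using assms by (simp add: nn_integral_count_space_finite)
qed

lemma ecs:
  fixes f g :: "'a \<Rightarrow> ennreal"
  shows "(infsum (\<lambda>x. f x * g x) A)\<^sup>2 \<le> infsum (\<lambda>x. (f x)\<^sup>2) A * infsum (\<lambda>x. (g x)\<^sup>2) A"
proof -
  let ?S = "infsum (\<lambda>x. f x * g x) A"
  let ?R = "infsum (\<lambda>x. (f x)\<^sup>2) A * infsum (\<lambda>x. (g x)\<^sup>2) A"
  have "((\<lambda>x. f x * g x) has_sum ?S) A" by (simp add: has_sum_infsum)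
  then have t: "((\<lambda>F. sum (\<lambda>x. f x * g x) F) \<longlongrightarrow> ?S) (finite_subsets_at_top A)"
    by (simp add: has_sum_def)
  have t2: "((\<lambda>F. sum (\<lambda>x. f x * g x) F * sum (\<lambda>x. f x * g x) F) \<longlongrightarrow> ?S * ?S) (finite_subsets_at_top A)"
    by (rule tendsto_mult_ennreal[OF t t]) auto
  have ev: "\<forall>\<^sub>F F in finite_subsets_at_top A. sum (\<lambda>x. f x * g x) F * sum (\<lambda>x. f x * g x) F \<le> ?R"
  proof (rule eventually_finite_subsets_at_top_weakI)
    fix F assume F: "finite F" "F \<subseteq> A"
    have "sum (\<lambda>x. f x * g x) F * sum (\<lambda>x. f x * g x) F = (\<Sum>x\<in>F. f x * g x)\<^sup>2"
      by (simp add: power2_eq_square)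
    also have "\<dots> \<le> (\<Sum>x\<in>F. (f x)\<^sup>2) * (\<Sum>x\<in>F. (g x)\<^sup>2)" using F(1) by (rule ecs_finite)
    also have "\<dots> \<le> ?R"
      using F by (intro mult_mono einf_finite_le) auto
    finally show "sum (\<lambda>x. f x * g x) F * sum (\<lambda>x. f x * g x) F \<le> ?R" .
  qed
  have "?S * ?S \<le> ?R"
    using tendsto_le[OF finite_subsets_at_top_neq_bot tendsto_const t2 ev] .
  then show ?thesis by (simp add: power2_eq_square)
qed

lemma AL:
  fixes K :: "'k set" and J :: "'k \<Rightarrow> 'j set" and a :: "'k \<Rightarrow> 'j \<Rightarrow> 'x" and b :: "'k \<Rightarrow> 'j \<Rightarrow> 'y"
    and w :: "'k \<Rightarrow> real" and Wa :: "'x \<Rightarrow> real" and Wb :: "'y \<Rightarrow> real"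
    and Q :: "'x \<Rightarrow> 'y \<Rightarrow> real" and m :: "'k \<Rightarrow> 'j \<Rightarrow> real"
    and U :: "'x \<Rightarrow> ennreal" and V :: "'y \<Rightarrow> ennreal" and B :: ennreal and c :: real
  assumes inj: "inj_on (\<lambda>(k,j). (a k j, b k j)) (Sigma K J)"
    and maps: "\<And>k j. k \<in> K \<Longrightarrow> j \<in> J k \<Longrightarrow> a k j \<in> X \<and> b k j \<in> Y"
    and Qpos: "\<And>k j. k \<in> K \<Longrightarrow> j \<in> J k \<Longrightarrow> Q (a k j) (b k j) > 0"
    and mnn: "\<And>k j. k \<in> K \<Longrightarrow> j \<in> J k \<Longrightarrow> m k j \<ge> 0"
    and Wann: "\<And>x. Wa x \<ge> 0" and Wbnn: "\<And>y. Wb y \<ge> 0" and cnn: "c \<ge> 0"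
    and wQ: "\<And>k j. k \<in> K \<Longrightarrow> j \<in> J k \<Longrightarrow> w k \<le> c * Q (a k j) (b k j) * Wa (a k j) * Wb (b k j)"
    and Bnd: "\<And>k. k \<in> K \<Longrightarrow> infsum (\<lambda>j. ennreal (m k j ^ 2 * Q (a k j) (b k j))) (J k) \<le> B"
  shows "infsum (\<lambda>k. ennreal (w k) * (infsum (\<lambda>j. ennreal (m k j) * U (a k j) * V (b k j)) (J k))\<^sup>2) K
         \<le> B * ennreal c * infsum (\<lambda>x. ennreal (Wa x) * (U x)\<^sup>2) X * infsum (\<lambda>y. ennreal (Wb y) * (V y)\<^sup>2) Y"
proof -
  define G where "G = (\<lambda>(x,y). (ennreal (Wa x) * (U x)\<^sup>2) * (ennreal (Wb y) * (V y)\<^sup>2))"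
  have perk: "ennreal (w k) * (infsum (\<lambda>j. ennreal (m k j) * U (a k j) * V (b k j)) (J k))\<^sup>2
      \<le> B * ennreal c * infsum (\<lambda>j. G (a k j, b k j)) (J k)" if k: "k \<in> K" for k
  proof -
    let ?q = "\<lambda>j. Q (a k j) (b k j)"
    have eqf: "infsum (\<lambda>j. ennreal (m k j) * U (a k j) * V (b k j)) (J k)
        = infsum (\<lambda>j. ennreal (m k j * sqrt (?q j)) * (ennreal (1 / sqrt (?q j)) * U (a k j) * V (b k j))) (J k)"
    proof (rule infsum_cong)
      fix j assume j: "j \<in> J k"
      have q: "?q j > 0" using Qpos[OF k j] .
      have "ennreal (m k j) = ennreal (m k j * sqrt (?q j)) * ennreal (1 / sqrt (?q j))"
        using q mnn[OF k j] by (simp add: ennreal_mult[symmetric])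
      then show "ennreal (m k j) * U (a k j) * V (b k j) = ennreal (m k j * sqrt (?q j)) * (ennreal (1 / sqrt (?q j)) * U (a k j) * V (b k j))"
        by (simp add: mult.assoc)
    qed
    have "(infsum (\<lambda>j. ennreal (m k j) * U (a k j) * V (b k j)) (J k))\<^sup>2
        \<le> infsum (\<lambda>j. (ennreal (m k j * sqrt (?q j)))\<^sup>2) (J k) * infsum (\<lambda>j. (ennreal (1 / sqrt (?q j)) * U (a k j) * V (b k j))\<^sup>2) (J k)"
      unfolding eqf by (rule ecs)
    also have "infsum (\<lambda>j. (ennreal (m k j * sqrt (?q j)))\<^sup>2) (J k) = infsum (\<lambda>j. ennreal (m k j ^ 2 * ?q j)) (J k)"
    proof (rule infsum_cong)
      fix j assume j: "j \<in> J k"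
      have q: "?q j > 0" using Qpos[OF k j] .
      have nn: "0 \<le> m k j * sqrt (?q j)" using q mnn[OF k j] by simp
      have "(ennreal (m k j * sqrt (?q j)))\<^sup>2 = ennreal ((m k j * sqrt (?q j))\<^sup>2)"
        using ennreal_power[OF nn, of 2] by simp
      also have "\<dots> = ennreal (m k j ^ 2 * ?q j)" using q by (simp add: power_mult_distrib)
      finally show "(ennreal (m k j * sqrt (?q j)))\<^sup>2 = ennreal (m k j ^ 2 * ?q j)" .
    qed
    also have "\<dots> \<le> B" using Bnd[OF k] .
    finally have f2: "(infsum (\<lambda>j. ennreal (m k j) * U (a k j) * V (b k j)) (J k))\<^sup>2
        \<le> B * infsum (\<lambda>j. (ennreal (1 / sqrt (?q j)) * U (a k j) * V (b k j))\<^sup>2) (J k)"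
      by (simp add: mult_right_mono)
    have "ennreal (w k) * (infsum (\<lambda>j. ennreal (m k j) * U (a k j) * V (b k j)) (J k))\<^sup>2
       \<le> ennreal (w k) * (B * infsum (\<lambda>j. (ennreal (1 / sqrt (?q j)) * U (a k j) * V (b k j))\<^sup>2) (J k))"
      using f2 by (rule mult_left_mono) simp
    also have "\<dots> = B * infsum (\<lambda>j. ennreal (w k) * (ennreal (1 / sqrt (?q j)) * U (a k j) * V (b k j))\<^sup>2) (J k)"
      by (simp add: einf_cmult_right mult.assoc mult.left_commute)
    also have "\<dots> \<le> B * infsum (\<lambda>j. ennreal c * G (a k j, b k j)) (J k)"
    proof (intro mult_left_mono einf_mono)
      fix j assume j: "j \<in> J k"
      have q: "?q j > 0" using Qpos[OF k j] .
      have e1: "ennreal (w k) * (ennreal (1 / sqrt (?q j)) * U (a k j) * V (b k j))\<^sup>2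
          = ennreal (w k) * ennreal (1 / ?q j) * ((U (a k j))\<^sup>2 * (V (b k j))\<^sup>2)"
      proof -
        have "(ennreal (1 / sqrt (?q j)))\<^sup>2 = ennreal ((1 / sqrt (?q j))\<^sup>2)"
          using ennreal_power[of "1 / sqrt (?q j)" 2] q by simp
        also have "\<dots> = ennreal (1 / ?q j)" using q by (simp add: power_divide)
        finally have "(ennreal (1 / sqrt (?q j)))\<^sup>2 = ennreal (1 / ?q j)" .
        then show ?thesis by (simp add: power_mult_distrib mult.assoc)
      qed
      have e2: "ennreal (w k) * ennreal (1 / ?q j) \<le> ennreal c * ennreal (Wa (a k j)) * ennreal (Wb (b k j))"
      proof (cases "w k \<ge> 0")
        case True
        have "ennreal (w k) * ennreal (1 / ?q j) = ennreal (w k / ?q j)"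
          using True q by (simp add: ennreal_mult[symmetric])
        also have "\<dots> \<le> ennreal (c * Wa (a k j) * Wb (b k j))"
        proof (rule ennreal_leI)
          have "w k \<le> (c * Wa (a k j) * Wb (b k j)) * ?q j" using wQ[OF k j] by (simp add: algebra_simps)
          then show "w k / ?q j \<le> c * Wa (a k j) * Wb (b k j)" using q by (simp add: divide_le_eq)
        qed
        also have "\<dots> = ennreal c * ennreal (Wa (a k j)) * ennreal (Wb (b k j))"
          using cnn Wann Wbnn by (simp add: ennreal_mult)
        finally show ?thesis .
      next
        case False
        then show ?thesis by (simp add: ennreal_neg)
      qed
      have "ennreal (w k) * (ennreal (1 / sqrt (?q j)) * U (a k j) * V (b k j))\<^sup>2
          \<le> ennreal c * ennreal (Wa (a k j)) * ennreal (Wb (b k j)) * ((U (a k j))\<^sup>2 * (V (b k j))\<^sup>2)"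
        unfolding e1 using e2 by (rule mult_right_mono) simp
      also have "\<dots> = ennreal c * G (a k j, b k j)"
        by (simp add: G_def mult_ac)
      finally show "ennreal (w k) * (ennreal (1 / sqrt (?q j)) * U (a k j) * V (b k j))\<^sup>2 \<le> ennreal c * G (a k j, b k j)" .
    qed simp
    also have "\<dots> = B * ennreal c * infsum (\<lambda>j. G (a k j, b k j)) (J k)"
      by (simp add: einf_cmult_right mult.assoc)
    finally show ?thesis .
  qed
  have "infsum (\<lambda>k. ennreal (w k) * (infsum (\<lambda>j. ennreal (m k j) * U (a k j) * V (b k j)) (J k))\<^sup>2) K
     \<le> infsum (\<lambda>k. B * ennreal c * infsum (\<lambda>j. G (a k j, b k j)) (J k)) K"
    using perk by (rule einf_mono)
  also have "\<dots> = B * ennreal c * infsum (\<lambda>(k,j). G (a k j, b k j)) (Sigma K J)"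
    by (simp add: einf_cmult_right einf_Sigma)
  also have "infsum (\<lambda>(k,j). G (a k j, b k j)) (Sigma K J) = infsum G ((\<lambda>(k,j). (a k j, b k j)) ` Sigma K J)"
    by (subst infsum_reindex[OF inj]) (simp add: o_def case_prod_unfold)
  also have "\<dots> \<le> infsum G (X \<times> Y)"
    using maps by (intro einf_subset) auto
  also have "\<dots> = infsum (\<lambda>x. ennreal (Wa x) * (U x)\<^sup>2) X * infsum (\<lambda>y. ennreal (Wb y) * (V y)\<^sup>2) Y"
    unfolding G_def by (rule einf_prod)
  finally show ?thesis by (simp add: mult_left_mono mult.assoc)
qed



definition Zf :: "nat \<Rightarrow> (nat \<Rightarrow> int) set" where
  "Zf N = {k. \<forall>j\<ge>N. k j = 0}"

definition wt :: "(nat \<Rightarrow> real) \<Rightarrow> nat \<Rightarrow> (nat \<Rightarrow> int) \<Rightarrow> real" where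
  "wt \<sigma> N k = (\<Prod>j<N. jbr (of_int (k j)) powr (2 * \<sigma> j))"

definition qq :: "real \<Rightarrow> int \<Rightarrow> int \<Rightarrow> real" where
  "qq s x y = jbr (of_int x) powr (-2 * s) + jbr (of_int y) powr (-2 * s)"

definition Qf :: "(nat \<Rightarrow> real) \<Rightarrow> nat \<Rightarrow> (nat \<Rightarrow> int) \<Rightarrow> (nat \<Rightarrow> int) \<Rightarrow> real" where
  "Qf \<sigma> N u v = (\<Prod>j<N. qq (\<sigma> j) (u j) (v j))"

lemma jbr_pos: "jbr x > 0"
  unfolding jbr_def by (simp add: add_pos_nonneg)

lemma jbr_ge1: "jbr x \<ge> 1"
  unfolding jbr_def by simp

lemma jbr_powr: "jbr x powr p = (1 + x\<^sup>2) powr (p / 2)"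
proof -
  have "jbr x = (1 + x\<^sup>2) powr (1/2)"
    unfolding jbr_def by (simp add: powr_half_sqrt add_pos_nonneg)
  then show ?thesis by (simp add: powr_powr)
qed

lemma jbr_mono: "\<bar>x\<bar> \<le> \<bar>y\<bar> \<Longrightarrow> jbr x \<le> jbr y"
  unfolding jbr_def by (simp add: abs_le_square_iff)

lemma jbr_sum: "jbr (x + y) \<le> 2 * max (jbr x) (jbr y)"
proof -
  have "1 + (x+y)\<^sup>2 \<le> 4 * max (1 + x\<^sup>2) (1 + y\<^sup>2)"
  proof (cases "x\<^sup>2 \<le> y\<^sup>2")
    case True
    have "(x+y)\<^sup>2 \<le> 2*x\<^sup>2 + 2*y\<^sup>2" 
    proof -
      have "(x+y)\<^sup>2 + (x-y)\<^sup>2 = 2*x\<^sup>2 + 2*y\<^sup>2" by (simp add: power2_eq_square algebra_simps)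
      moreover have "(x-y)\<^sup>2 \<ge> 0" by simp
      ultimately show ?thesis by linarith
    qed
    then show ?thesis using True by (simp add: max_def)
  next
    case False
    have "(x+y)\<^sup>2 \<le> 2*x\<^sup>2 + 2*y\<^sup>2" 
    proof -
      have "(x+y)\<^sup>2 + (x-y)\<^sup>2 = 2*x\<^sup>2 + 2*y\<^sup>2" by (simp add: power2_eq_square algebra_simps)
      moreover have "(x-y)\<^sup>2 \<ge> 0" by simp
      ultimately show ?thesis by linarith
    qed
    then show ?thesis using False by (simp add: max_def)
  qed
  then have "sqrt (1 + (x+y)\<^sup>2) \<le> sqrt (4 * max (1 + x\<^sup>2) (1 + y\<^sup>2))"
    by (rule real_sqrt_le_mono)
  also have "\<dots> = 2 * max (jbr x) (jbr y)"
    unfolding jbr_def by (simp add: real_sqrt_mult max_def)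
  finally show ?thesis unfolding jbr_def .
qed

lemma coord_ineq:
  fixes x y :: int
  assumes s: "s \<ge> 0"
  shows "jbr (of_int (x + y)) powr (2* s) \<le> 4 powr s * qq s x y * jbr (of_int x) powr (2* s) * jbr (of_int y) powr (2* s)"
proof -
  define A where "A = jbr (of_int x)"
  define B where "B = jbr (of_int y)"
  have A: "A > 0" "A powr (-2* s) * A powr (2* s) = 1" unfolding A_def using jbr_pos[of "of_int x"]
    by (simp_all add: powr_add[symmetric])
  have B: "B > 0" "B powr (-2* s) * B powr (2* s) = 1" unfolding B_def using jbr_pos[of "of_int y"]
    by (simp_all add: powr_add[symmetric])
  have "jbr (of_int (x + y)) powr (2* s) \<le> (2 * max A B) powr (2* s)"
    unfolding A_def B_def using s jbr_sum[of "of_int x" "of_int y"] jbr_pos[of "of_int x + of_int y"]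
    by (intro powr_mono2) auto
  also have "\<dots> = 2 powr (2* s) * max A B powr (2* s)"
    using A B by (simp add: powr_mult)
  also have "2 powr (2* s) = 4 powr s"
    by (simp add: powr_powr[symmetric])
  also have "max A B powr (2* s) \<le> A powr (2* s) + B powr (2* s)"
    by (simp add: max_def)
  also have "A powr (2* s) + B powr (2* s) = qq s x y * A powr (2* s) * B powr (2* s)"
    unfolding qq_def A_def[symmetric] B_def[symmetric]
    using A(2) B(2) by (simp add: algebra_simps)
  finally show ?thesis unfolding A_def B_def by (simp add: mult.assoc)
qed

lemma wt_ineq:
  assumes "\<And>j. j < N \<Longrightarrow> \<sigma> j \<ge> 0"
  shows "wt \<sigma> N (\<lambda>j. u j + v j) \<le> (\<Prod>j<N. 4 powr \<sigma> j) * Qf \<sigma> N u v * wt \<sigma> N u * wt \<sigma> N v"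
proof -
  have "wt \<sigma> N (\<lambda>j. u j + v j) \<le> (\<Prod>j<N. 4 powr \<sigma> j * qq (\<sigma> j) (u j) (v j) * jbr (of_int (u j)) powr (2* \<sigma> j) * jbr (of_int (v j)) powr (2* \<sigma> j))"
    unfolding wt_def
  proof (intro prod_mono conjI)
    fix j assume j: "j \<in> {..<N}"
    show "0 \<le> jbr (of_int (u j + v j)) powr (2 * \<sigma> j)" by simp
    show "jbr (of_int (u j + v j)) powr (2 * \<sigma> j) \<le> 4 powr \<sigma> j * qq (\<sigma> j) (u j) (v j) * jbr (of_int (u j)) powr (2 * \<sigma> j) * jbr (of_int (v j)) powr (2 * \<sigma> j)"
      using assms j by (intro coord_ineq) auto
  qed
  also have "\<dots> = (\<Prod>j<N. 4 powr \<sigma> j) * Qf \<sigma> N u v * wt \<sigma> N u * wt \<sigma> N v"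
    unfolding Qf_def wt_def by (simp add: prod.distrib)
  finally show ?thesis .
qed


lemma Zf_upd: "r \<in> Zf N \<Longrightarrow> i < N \<Longrightarrow> r(i := n) \<in> Zf N"
  unfolding Zf_def by auto

lemma PL:
  fixes h :: "nat \<Rightarrow> int \<Rightarrow> ennreal"
  shows "infsum (\<lambda>k. \<Prod>i<N. h i (k i)) (Zf N) = (\<Prod>i<N. infsum (h i) UNIV)"
proof (induction N)
  case 0
  have "Zf 0 = {\<lambda>_. 0}" by (auto simp: Zf_def)
  then show ?case by simp
next
  case (Suc N)
  have bij: "bij_betw (\<lambda>(r,n). r(N:=n)) (Zf N \<times> UNIV) (Zf (Suc N))"
  proof (unfold bij_betw_def, intro conjI)
    show "inj_on (\<lambda>(r,n). r(N:=n)) (Zf N \<times> UNIV)"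
    proof (rule inj_onI, clarify)
      fix r1 n1 r2 n2 assume r: "r1 \<in> Zf N" "r2 \<in> Zf N" and e: "r1(N := n1) = r2(N := n2)"
      have "n1 = n2" using fun_cong[OF e, of N] by simp
      moreover have "r1 = r2"
      proof
        fix i show "r1 i = r2 i"
          using fun_cong[OF e, of i] r by (cases "i = N") (auto simp: Zf_def)
      qed
      ultimately show "r1 = r2 \<and> n1 = n2" by simp
    qed
    show "(\<lambda>(r,n). r(N:=n)) ` (Zf N \<times> UNIV) = Zf (Suc N)"
    proof
      show "(\<lambda>(r,n). r(N:=n)) ` (Zf N \<times> UNIV) \<subseteq> Zf (Suc N)" by (auto simp: Zf_def)
      show "Zf (Suc N) \<subseteq> (\<lambda>(r,n). r(N:=n)) ` (Zf N \<times> UNIV)"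
      proof
        fix k assume k: "k \<in> Zf (Suc N)"
        have "k = (\<lambda>(r,n). r(N:=n)) (k(N:=0), k N)" by simp
        moreover have "(k(N:=0), k N) \<in> Zf N \<times> UNIV" using k by (auto simp: Zf_def)
        ultimately show "k \<in> (\<lambda>(r,n). r(N:=n)) ` (Zf N \<times> UNIV)" by blast
      qed
    qed
  qed
  have "infsum (\<lambda>k. \<Prod>i<Suc N. h i (k i)) (Zf (Suc N))
      = infsum (\<lambda>x. (\<lambda>k. \<Prod>i<Suc N. h i (k i)) ((\<lambda>(r,n). r(N:=n)) x)) (Zf N \<times> UNIV)"
    by (rule infsum_reindex_bij_betw[OF bij, symmetric])
  also have "\<dots> = infsum (\<lambda>(r,n). (\<Prod>i<N. h i (r i)) * h N n) (Zf N \<times> UNIV)"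
  proof (rule infsum_cong, clarify)
    fix r n
    have "(\<Prod>i<N. h i ((r(N:=n)) i)) = (\<Prod>i<N. h i (r i))" by (intro prod.cong) auto
    then show "(\<Prod>i<Suc N. h i ((r(N:=n)) i)) = (\<Prod>i<N. h i (r i)) * h N n" by simp
  qed
  also have "\<dots> = infsum (\<lambda>k. \<Prod>i<N. h i (k i)) (Zf N) * infsum (h N) UNIV"
    by (rule einf_prod)
  finally show ?case using Suc by simp
qed

definition R0 :: "nat \<Rightarrow> (nat \<Rightarrow> int) set" where
  "R0 N = {r \<in> Zf N. r 0 = 0}"

lemma DL:
  fixes G :: "(nat \<Rightarrow> int) \<Rightarrow> ennreal"
  assumes N: "N \<ge> 1"
  shows "infsum G (Zf N) = infsum (\<lambda>r. infsum (\<lambda>n. G (r(0 := n))) UNIV) (R0 N)"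
proof -
  have bij: "bij_betw (\<lambda>(r,n). r(0:=n)) (R0 N \<times> UNIV) (Zf N)"
  proof (unfold bij_betw_def, intro conjI)
    show "inj_on (\<lambda>(r,n). r(0:=n)) (R0 N \<times> UNIV)"
    proof (rule inj_onI, clarify)
      fix r1 n1 r2 n2 assume r: "r1 \<in> R0 N" "r2 \<in> R0 N" and e: "r1(0 := n1) = r2(0 := n2)"
      have "n1 = n2" using fun_cong[OF e, of 0] by simp
      moreover have "r1 = r2"
      proof
        fix i show "r1 i = r2 i"
          using fun_cong[OF e, of i] r by (cases "i = 0") (auto simp: R0_def)
      qed
      ultimately show "r1 = r2 \<and> n1 = n2" by simp
    qed
    show "(\<lambda>(r,n). r(0:=n)) ` (R0 N \<times> UNIV) = Zf N"
    proof
      show "(\<lambda>(r,n). r(0:=n)) ` (R0 N \<times> UNIV) \<subseteq> Zf N" using N by (auto simp: Zf_def R0_def)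
      show "Zf N \<subseteq> (\<lambda>(r,n). r(0:=n)) ` (R0 N \<times> UNIV)"
      proof
        fix k assume k: "k \<in> Zf N"
        have "k = (\<lambda>(r,n). r(0:=n)) (k(0:=0), k 0)" by simp
        moreover have "(k(0:=0), k 0) \<in> R0 N \<times> UNIV" using k N by (auto simp: Zf_def R0_def)
        ultimately show "k \<in> (\<lambda>(r,n). r(0:=n)) ` (R0 N \<times> UNIV)" by blast
      qed
    qed
  qed
  have "infsum G (Zf N) = infsum (\<lambda>x. G ((\<lambda>(r,n). r(0:=n)) x)) (R0 N \<times> UNIV)"
    by (rule infsum_reindex_bij_betw[OF bij, symmetric])
  also have "\<dots> = infsum (\<lambda>r. infsum (\<lambda>n. G (r(0 := n))) UNIV) (R0 N)"
    by (simp add: einf_Sigma case_prod_unfold)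
  finally show ?thesis .
qed

lemma ennreal_infsum:
  fixes g :: "'a \<Rightarrow> real"
  assumes "g summable_on A" "\<And>x. x \<in> A \<Longrightarrow> g x \<ge> 0"
  shows "infsum (\<lambda>x. ennreal (g x)) A = ennreal (infsum g A)"
proof -
  have "\<And>F. finite F \<Longrightarrow> F \<subseteq> A \<Longrightarrow> sum (ennreal \<circ> g) F = ennreal (sum g F)"
    using assms(2) by (metis (mono_tags, lifting) comp_def subsetD sum.cong sum_ennreal)
  then have "infsum (ennreal \<circ> g) A = ennreal (infsum g A)"
    by (simp add: infsum_comm_additive_general assms(1))
  then show ?thesis by (simp add: o_def)
qed

lemma einf_Un_le:
  fixes f :: "'a \<Rightarrow> ennreal"
  shows "infsum f (A \<union> B) \<le> infsum f A + infsum f B"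
proof -
  have "infsum f (A \<union> B) = infsum f (A \<union> (B - A))" by (simp add: Un_Diff_cancel)
  also have "\<dots> = infsum f A + infsum f (B - A)" by (rule infsum_Un_disjoint) auto
  also have "\<dots> \<le> infsum f A + infsum f B" by (intro add_left_mono einf_subset) auto
  finally show ?thesis .
qed

lemma ZF:
  fixes p :: real
  assumes p: "p > 1/2"
  shows "infsum (\<lambda>n::int. ennreal ((1 + (of_int n)\<^sup>2) powr (-p))) UNIV < \<infinity>"
proof -
  define g where "g = (\<lambda>n::nat. (1 + (real n)\<^sup>2) powr (-p))"
  have gnn: "\<And>n. g n \<ge> 0" unfolding g_def by simp
  have s1: "summable (\<lambda>n::nat. real n powr (-2*p))"
    using p by (simp add: summable_real_powr_iff)
  have "summable g"
  proof (rule summable_comparison_test'[OF s1, of 1])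
    fix n :: nat assume n: "n \<ge> 1"
    then have n0: "real n > 0" by simp
    have "norm (g n) = (1 + (real n)\<^sup>2) powr (-p)" unfolding g_def by simp
    also have "\<dots> \<le> ((real n)\<^sup>2) powr (-p)"
      using p n0 by (intro powr_mono2') auto
    also have "((real n)\<^sup>2) powr (-p) = real n powr (-2*p)"
    proof -
      have sq: "(real n)\<^sup>2 = real n powr 2" using powr_realpow[OF n0, of 2] by simp
      show ?thesis unfolding sq powr_powr by simp
    qed
    finally show "norm (g n) \<le> real n powr (-2*p)" .
  qed
  then have gs: "g summable_on UNIV" using gnn by (simp add: summable_on_UNIV_nonneg_real_iff)
  define f where "f = (\<lambda>n::int. ennreal ((1 + (of_int n)\<^sup>2) powr (-p)))"
  have U: "(UNIV :: int set) = range int \<union> range (\<lambda>n. - int n)"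
  proof (rule set_eqI)
    fix x :: int
    show "x \<in> UNIV \<longleftrightarrow> x \<in> range int \<union> range (\<lambda>n. - int n)"
      by (cases "x \<ge> 0") (auto simp: image_iff intro: exI[of _ "nat x"] exI[of _ "nat (-x)"])
  qed
  have e1: "infsum f (range int) = infsum (\<lambda>n. ennreal (g n)) UNIV"
    by (subst infsum_reindex) (auto simp: f_def g_def o_def)
  have e2: "infsum f (range (\<lambda>n. - int n)) = infsum (\<lambda>n. ennreal (g n)) UNIV"
    by (subst infsum_reindex) (auto simp: f_def g_def o_def inj_on_def)
  have "infsum f UNIV \<le> infsum f (range int) + infsum f (range (\<lambda>n. - int n))"
    unfolding U by (rule einf_Un_le)
  also have "\<dots> = ennreal (infsum g UNIV) + ennreal (infsum g UNIV)"
    unfolding e1 e2 using gs gnn by (simp add: ennreal_infsum)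
  also have "\<dots> < \<infinity>" by simp
  finally show ?thesis unfolding f_def .
qed

definition Zs :: "real \<Rightarrow> ennreal" where
  "Zs s = infsum (\<lambda>n::int. ennreal (jbr (of_int n) powr (-2 * s))) UNIV"

lemma Zs_fin: "s > 1/2 \<Longrightarrow> Zs s < \<infinity>"
  unfolding Zs_def jbr_powr using ZF[of s] by simp

lemma int_shift_bij: "bij_betw (\<lambda>n::int. x - n) UNIV UNIV"
  by (rule bij_betwI[where g = "\<lambda>n. x - n"]) auto

lemma int_shift_bij2: "bij_betw (\<lambda>n::int. n + x) UNIV UNIV"
  by (rule bij_betwI[where g = "\<lambda>n. n - x"]) auto

lemma sum_qq: "infsum (\<lambda>n. ennreal (qq s (x - n) n)) UNIV = 2 * Zs s"
proof -
  have "infsum (\<lambda>n. ennreal (qq s (x - n) n)) UNIV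
     = infsum (\<lambda>n. ennreal (jbr (of_int (x - n)) powr (-2 * s)) + ennreal (jbr (of_int n) powr (-2 * s))) UNIV"
    unfolding qq_def by (intro infsum_cong) (simp add: ennreal_plus)
  also have "\<dots> = infsum (\<lambda>n. ennreal (jbr (of_int (x - n)) powr (-2 * s))) UNIV + Zs s"
    unfolding Zs_def by (rule infsum_add) auto
  also have "infsum (\<lambda>n. ennreal (jbr (of_int (x - n)) powr (-2 * s))) UNIV = Zs s"
    unfolding Zs_def using infsum_reindex_bij_betw[OF int_shift_bij[of x], of "\<lambda>n. ennreal (jbr (of_int n) powr (-2 * s))"]
    by simp
  finally show ?thesis by (simp add: mult_2)
qed



lemma jbr_ne0[simp]: "jbr x \<noteq> 0" using jbr_pos[of x] by simp

lemma qq_nonneg: "qq s x y \<ge> 0" unfolding qq_def by (simp add: add_nonneg_nonneg)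

lemma Zdot_sub: "Zdot N \<subseteq> Zf N"
  unfolding Zdot_def Zf_def by auto

lemma ennreal_Qf: "ennreal (Qf \<sigma> N u v) = (\<Prod>j<N. ennreal (qq (\<sigma> j) (u j) (v j)))"
  unfolding Qf_def by (rule prod_ennreal[symmetric]) (simp add: qq_def add_nonneg_nonneg)

lemma Qf_nonneg: "Qf \<sigma> N u v \<ge> 0"
  unfolding Qf_def qq_def by (intro prod_nonneg) (simp add: add_nonneg_nonneg)

lemma Qf_pos: "Qf \<sigma> N u v > 0"
  unfolding Qf_def qq_def by (intro prod_pos ballI add_pos_pos) simp_all

lemma QB_i:
  "infsum (\<lambda>k'. ennreal (Qf \<sigma> N (k - k') k')) (Zdot N - {k}) \<le> (\<Prod>j<N. 2 * Zs (\<sigma> j))"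
proof -
  have "infsum (\<lambda>k'. ennreal (Qf \<sigma> N (k - k') k')) (Zdot N - {k})
      \<le> infsum (\<lambda>k'. \<Prod>j<N. ennreal (qq (\<sigma> j) (k j - k' j) (k' j))) (Zf N)"
    using Zdot_sub by (intro einf_mono_neutral) (auto simp: ennreal_Qf)
  also have "\<dots> = (\<Prod>j<N. infsum (\<lambda>n. ennreal (qq (\<sigma> j) (k j - n) n)) UNIV)"
    by (rule PL[where h = "\<lambda>j n. ennreal (qq (\<sigma> j) (k j - n) n)"])
  also have "\<dots> = (\<Prod>j<N. 2 * Zs (\<sigma> j))"
    by (simp add: sum_qq)
  finally show ?thesis .
qed

lemma qq0: "qq 0 x y = 2"
  unfolding qq_def using jbr_pos[of "of_int x"] jbr_pos[of "of_int y"] by simp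

lemma Qf_0:
  assumes "\<sigma> 0 = 0" "N \<ge> 1"
  shows "Qf \<sigma> N u v = 2 * (\<Prod>j\<in>{1..<N}. qq (\<sigma> j) (u j) (v j))"
proof -
  have "{..<N} = insert 0 {1..<N}" using assms(2) by auto
  then show ?thesis unfolding Qf_def using assms(1) by (simp add: qq0)
qed

lemma infsum_single_int: "infsum (\<lambda>n::int. if n = 0 then (2::ennreal) else 0) UNIV = 2"
proof -
  have "infsum (\<lambda>n::int. if n = 0 then (2::ennreal) else 0) UNIV = infsum (\<lambda>n::int. if n = 0 then (2::ennreal) else 0) {0}"
    by (rule infsum_cong_neutral) auto
  then show ?thesis by simp
qed

lemma QB_R:
  assumes s0: "\<sigma> 0 = 0" and N: "N \<ge> 1"
  shows "infsum (\<lambda>r. ennreal (Qf \<sigma> N (k - r) r)) (R0 N) \<le> 2 * (\<Prod>j\<in>{1..<N}. 2 * Zs (\<sigma> j))"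
proof -
  define h where "h = (\<lambda>j n. if j = 0 then (if n = 0 then (2::ennreal) else 0) else ennreal (qq (\<sigma> j) (k j - n) n))"
  have ins: "{..<N} = insert 0 {1..<N}" using N by auto
  have "infsum (\<lambda>r. ennreal (Qf \<sigma> N (k - r) r)) (R0 N) \<le> infsum (\<lambda>r. \<Prod>j<N. h j (r j)) (Zf N)"
  proof (rule einf_mono_neutral)
    show "R0 N \<subseteq> Zf N" unfolding R0_def by auto
    fix r assume r: "r \<in> R0 N"
    have "ennreal (Qf \<sigma> N (k - r) r) = 2 * (\<Prod>j\<in>{1..<N}. ennreal (qq (\<sigma> j) (k j - r j) (r j)))"
    proof -
      have "Qf \<sigma> N (k - r) r = 2 * (\<Prod>j\<in>{1..<N}. qq (\<sigma> j) (k j - r j) (r j))"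
        using Qf_0[of \<sigma> N, OF s0 N] by simp
      moreover have "ennreal (\<Prod>j\<in>{1..<N}. qq (\<sigma> j) (k j - r j) (r j)) = (\<Prod>j\<in>{1..<N}. ennreal (qq (\<sigma> j) (k j - r j) (r j)))"
        by (rule prod_ennreal[symmetric]) (simp add: qq_nonneg)
      ultimately show ?thesis by (simp add: ennreal_mult prod_nonneg qq_nonneg)
    qed
    also have "\<dots> = (\<Prod>j<N. h j (r j))"
      unfolding ins using r by (simp add: h_def R0_def)
    finally show "ennreal (Qf \<sigma> N (k - r) r) \<le> (\<Prod>j<N. h j (r j))" by simp
  qed
  also have "\<dots> = (\<Prod>j<N. infsum (h j) UNIV)" by (rule PL)
  also have "\<dots> = infsum (h 0) UNIV * (\<Prod>j\<in>{1..<N}. infsum (h j) UNIV)"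
    unfolding ins by simp
  also have "\<dots> = 2 * (\<Prod>j\<in>{1..<N}. 2 * Zs (\<sigma> j))"
  proof -
    have "infsum (h 0) UNIV = 2" unfolding h_def using infsum_single_int by simp
    moreover have "(\<Prod>j\<in>{1..<N}. infsum (h j) UNIV) = (\<Prod>j\<in>{1..<N}. 2 * Zs (\<sigma> j))"
      by (intro prod.cong) (auto simp: h_def sum_qq)
    ultimately show ?thesis by simp
  qed
  finally show ?thesis .
qed

lemma adot_diff: "adot N \<alpha> (k - k') = adot N \<alpha> k - adot N \<alpha> k'"
  unfolding adot_def by (simp add: sum_subtractf algebra_simps)

lemma adot_upd0:
  assumes "r 0 = 0" "N \<ge> 1"
  shows "adot N \<alpha> (r(0 := n)) = adot N \<alpha> r + \<alpha> 0 * of_int n"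
proof -
  have "adot N \<alpha> (r(0 := n)) = (\<Sum>j<N. \<alpha> j * of_int (r j) + (if j = 0 then \<alpha> 0 * of_int n else 0))"
    unfolding adot_def using assms(1) by (intro sum.cong) auto
  also have "\<dots> = adot N \<alpha> r + \<alpha> 0 * of_int n"
    unfolding adot_def using assms(2) by (simp add: sum.distrib)
  finally show ?thesis .
qed

lemma near:
  fixes c d :: real
  assumes d: "d \<noteq> 0"
  shows "\<exists>n0::int. \<forall>n::int. \<bar>c + d * of_int n\<bar> \<ge> \<bar>d\<bar> * \<bar>of_int (n - n0)\<bar> / 2"
proof -
  define y where "y = - c / d"
  define n0 where "n0 = \<lfloor>y + 1/2\<rfloor>"
  have y1: "of_int n0 \<le> y + 1/2" "y + 1/2 < of_int n0 + 1" unfolding n0_def by linarith+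
  have "\<bar>c + d * of_int n\<bar> \<ge> \<bar>d\<bar> * \<bar>of_int (n - n0)\<bar> / 2" for n
  proof -
    have e: "c + d * of_int n = d * (of_int n - y)" unfolding y_def using d by (simp add: field_simps)
    have "\<bar>of_int (n - n0)\<bar> / 2 \<le> \<bar>of_int n - y\<bar>"
    proof (cases "n = n0")
      case True then show ?thesis by simp
    next
      case False
      then have "\<bar>of_int (n - n0)::real\<bar> \<ge> 1" by linarith
      then show ?thesis using y1 unfolding of_int_diff by (auto simp: abs_if split: if_splits)
    qed
    then have "\<bar>d\<bar> * (\<bar>of_int (n - n0)\<bar> / 2) \<le> \<bar>d\<bar> * \<bar>of_int n - y\<bar>"
      by (rule mult_left_mono) simp
    then show ?thesis unfolding e by (simp add: abs_mult)
  qed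
  then show ?thesis by blast
qed

lemma jbr_powr_sq: "(jbr x powr (-b))\<^sup>2 = jbr x powr (-2 * b)"
  by (simp add: power2_eq_square powr_add[symmetric])

lemma phi_fin:
  fixes t \<beta> :: real
  assumes t: "t > 0" and \<beta>: "\<beta> > 1/4"
  shows "infsum (\<lambda>n::int. ennreal (jbr (t * (of_int n)\<^sup>2) powr (-2 * \<beta>))) UNIV < \<infinity>"
proof -
  define \<tau> where "\<tau> = min 1 (t\<^sup>2) / 2"
  have \<tau>: "\<tau> > 0" unfolding \<tau>_def using t by simp
  have pt: "jbr (t * (of_int n)\<^sup>2) powr (-2 * \<beta>) \<le> \<tau> powr (-\<beta>) * (1 + (of_int n)\<^sup>2) powr (-(2*\<beta>))" for n :: int
  proof -
    define z :: real where "z = of_int n"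
    have z2: "z\<^sup>2 \<ge> 0" by simp
    have A: "(1 + z\<^sup>2)\<^sup>2 \<le> 2 * (1 + (z\<^sup>2)\<^sup>2)"
    proof -
      have "0 \<le> (z\<^sup>2 - 1)\<^sup>2" by simp
      then show ?thesis by (simp add: power2_eq_square algebra_simps)
    qed
    have B: "min 1 (t\<^sup>2) * (1 + (z\<^sup>2)\<^sup>2) \<le> 1 + (t * z\<^sup>2)\<^sup>2"
    proof -
      have "min 1 (t\<^sup>2) * (z\<^sup>2)\<^sup>2 \<le> t\<^sup>2 * (z\<^sup>2)\<^sup>2" by (intro mult_right_mono) auto
      moreover have "min 1 (t\<^sup>2) \<le> 1" by simp
      ultimately show ?thesis by (simp add: power_mult_distrib algebra_simps)
    qed
    have C: "\<tau> * (1 + z\<^sup>2)\<^sup>2 \<le> 1 + (t * z\<^sup>2)\<^sup>2"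
    proof -
      have "\<tau> * (1 + z\<^sup>2)\<^sup>2 \<le> \<tau> * (2 * (1 + (z\<^sup>2)\<^sup>2))" using A \<tau> by (intro mult_left_mono) auto
      also have "\<dots> = min 1 (t\<^sup>2) * (1 + (z\<^sup>2)\<^sup>2)" unfolding \<tau>_def by simp
      finally show ?thesis using B by linarith
    qed
    have "jbr (t * z\<^sup>2) powr (-2 * \<beta>) = (1 + (t * z\<^sup>2)\<^sup>2) powr (-\<beta>)"
      by (simp add: jbr_powr)
    also have "\<dots> \<le> (\<tau> * (1 + z\<^sup>2)\<^sup>2) powr (-\<beta>)"
    proof -
      have "1 + z\<^sup>2 > 0" by (simp add: add_pos_nonneg)
      then have "0 < \<tau> * (1 + z\<^sup>2)\<^sup>2" using \<tau> by simp
      then show ?thesis using C \<beta> by (intro powr_mono2') auto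
    qed
    also have "\<dots> = \<tau> powr (-\<beta>) * ((1 + z\<^sup>2)\<^sup>2) powr (-\<beta>)"
      using \<tau> by (simp add: powr_mult add_pos_nonneg)
    also have "((1 + z\<^sup>2)\<^sup>2) powr (-\<beta>) = (1 + z\<^sup>2) powr (-(2*\<beta>))"
    proof -
      have pos: "1 + z\<^sup>2 > 0" by (simp add: add_pos_nonneg)
      have sq: "(1 + z\<^sup>2)\<^sup>2 = (1 + z\<^sup>2) powr 2" using powr_realpow[OF pos, of 2] by simp
      show ?thesis unfolding sq powr_powr by simp
    qed
    finally show ?thesis unfolding z_def .
  qed
  have "infsum (\<lambda>n::int. ennreal (jbr (t * (of_int n)\<^sup>2) powr (-2 * \<beta>))) UNIV
     \<le> infsum (\<lambda>n::int. ennreal (\<tau> powr (-\<beta>)) * ennreal ((1 + (of_int n)\<^sup>2) powr (-(2*\<beta>)))) UNIV"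
    using pt by (intro einf_mono) (simp add: ennreal_mult[symmetric] ennreal_leI)
  also have "\<dots> = ennreal (\<tau> powr (-\<beta>)) * infsum (\<lambda>n::int. ennreal ((1 + (of_int n)\<^sup>2) powr (-(2*\<beta>)))) UNIV"
    by (rule einf_cmult_right)
  also have "\<dots> < \<infinity>"
    using ZF[of "2*\<beta>"] \<beta> by (simp add: ennreal_mult_less_top)
  finally show ?thesis .
qed

lemma OneD:
  fixes d \<delta> \<beta> :: real
  assumes d: "d \<noteq> 0" and \<delta>: "\<delta> > 0" and \<beta>: "\<beta> > 1/4"
  shows "\<exists>B0::ennreal. B0 < \<infinity> \<and> (\<forall>a c. \<bar>a\<bar> \<ge> \<delta> \<longrightarrow>
     infsum (\<lambda>n::int. ennreal ((jbr (\<bar>a\<bar> * \<bar>a - (c + d * of_int n)\<bar> * \<bar>c + d * of_int n\<bar>) powr (-\<beta>))\<^sup>2)) UNIV \<le> B0)"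
proof -
  define t where "t = \<delta> * (\<bar>d\<bar> / 2)\<^sup>2"
  have t: "t > 0" unfolding t_def using \<delta> d by simp
  define \<phi> where "\<phi> = (\<lambda>z::int. jbr (t * (of_int z)\<^sup>2) powr (-2 * \<beta>))"
  define B0 where "B0 = 2 * infsum (\<lambda>n. ennreal (\<phi> n)) UNIV"
  have B0: "B0 < \<infinity>" unfolding B0_def \<phi>_def using phi_fin[OF t \<beta>] by (simp add: ennreal_mult_less_top)
  have main: "infsum (\<lambda>n::int. ennreal ((jbr (\<bar>a\<bar> * \<bar>a - (c + d * of_int n)\<bar> * \<bar>c + d * of_int n\<bar>) powr (-\<beta>))\<^sup>2)) UNIV \<le> B0"
    if a: "\<bar>a\<bar> \<ge> \<delta>" for a c
  proof -
    obtain n0 where n0: "\<And>n::int. \<bar>c + d * of_int n\<bar> \<ge> \<bar>d\<bar> * \<bar>of_int (n - n0)\<bar> / 2"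
      using near[OF d, of c] by blast
    have dm: "-d \<noteq> 0" using d by simp
    obtain n1 where n1: "\<And>n::int. \<bar>(a - c) + (-d) * of_int n\<bar> \<ge> \<bar>-d\<bar> * \<bar>of_int (n - n1)\<bar> / 2"
      using near[OF dm, of "a - c"] by blast
    have pt: "ennreal ((jbr (\<bar>a\<bar> * \<bar>a - (c + d * of_int n)\<bar> * \<bar>c + d * of_int n\<bar>) powr (-\<beta>))\<^sup>2)
        \<le> ennreal (\<phi> (n - n0)) + ennreal (\<phi> (n - n1))" for n :: int
    proof -
      define P :: real where "P = \<bar>of_int (n - n0)\<bar>"
      define Q :: real where "Q = \<bar>of_int (n - n1)\<bar>"
      define s where "s = \<bar>a\<bar> * \<bar>a - (c + d * of_int n)\<bar> * \<bar>c + d * of_int n\<bar>"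
      have x1: "\<bar>c + d * of_int n\<bar> \<ge> \<bar>d\<bar> / 2 * P" using n0[of n] unfolding P_def by simp
      have x2: "\<bar>a - (c + d * of_int n)\<bar> \<ge> \<bar>d\<bar> / 2 * Q"
      proof -
        have "a - (c + d * of_int n) = (a - c) + (-d) * of_int n" by simp
        then show ?thesis using n1[of n] unfolding Q_def by (simp add: diff_diff_eq)
      qed
      have s1: "s \<ge> \<delta> * (\<bar>d\<bar> / 2 * Q) * (\<bar>d\<bar> / 2 * P)"
        unfolding s_def using a x1 x2 \<delta> P_def Q_def
        by (intro mult_mono) (auto intro: mult_nonneg_nonneg)
      have "\<delta> * (\<bar>d\<bar> / 2 * Q) * (\<bar>d\<bar> / 2 * P) = t * (P * Q)"
        unfolding t_def by (simp add: power2_eq_square algebra_simps)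
      also have "t * (P * Q) \<ge> t * (min P Q)\<^sup>2"
      proof -
        have Pn: "P \<ge> 0" and Qn: "Q \<ge> 0" unfolding P_def Q_def by simp_all
        have "(min P Q)\<^sup>2 \<le> P * Q"
        proof (cases "P \<le> Q")
          case True
          then have "P * P \<le> P * Q" using Pn by (intro mult_left_mono) auto
          then show ?thesis using True by (simp add: min_def power2_eq_square)
        next
          case False
          then have "Q * Q \<le> P * Q" using Qn by (intro mult_right_mono) auto
          then show ?thesis using False by (simp add: min_def power2_eq_square)
        qed
        then show ?thesis using t by (intro mult_left_mono) auto
      qed
      finally have s2: "s \<ge> t * (min P Q)\<^sup>2" using s1 by linarith
      have "(jbr s powr (-\<beta>))\<^sup>2 = jbr s powr (-2 * \<beta>)" by (rule jbr_powr_sq)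
      also have "\<dots> \<le> jbr (t * (min P Q)\<^sup>2) powr (-2 * \<beta>)"
      proof (rule powr_mono2')
        show "-2 * \<beta> \<le> 0" using \<beta> by simp
        show "0 < jbr (t * (min P Q)\<^sup>2)" by (rule jbr_pos)
        show "jbr (t * (min P Q)\<^sup>2) \<le> jbr s"
          using s2 t by (intro jbr_mono) auto
      qed
      also have "\<dots> \<le> \<phi> (n - n0) + \<phi> (n - n1)"
      proof -
        have P2: "P\<^sup>2 = (of_int (n - n0))\<^sup>2" unfolding P_def by simp
        have Q2: "Q\<^sup>2 = (of_int (n - n1))\<^sup>2" unfolding Q_def by simp
        have "jbr (t * (min P Q)\<^sup>2) powr (-2 * \<beta>) = \<phi> (n - n0) \<or> jbr (t * (min P Q)\<^sup>2) powr (-2 * \<beta>) = \<phi> (n - n1)"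
          unfolding \<phi>_def min_def using P2 Q2 by auto
        moreover have "\<phi> (n - n0) \<ge> 0" "\<phi> (n - n1) \<ge> 0" unfolding \<phi>_def by simp_all
        ultimately show ?thesis by linarith
      qed
      finally have "(jbr s powr (-\<beta>))\<^sup>2 \<le> \<phi> (n - n0) + \<phi> (n - n1)" .
      then show ?thesis unfolding s_def
        by (simp add: ennreal_plus[symmetric] \<phi>_def ennreal_leI del: ennreal_plus)
    qed
    have "infsum (\<lambda>n::int. ennreal ((jbr (\<bar>a\<bar> * \<bar>a - (c + d * of_int n)\<bar> * \<bar>c + d * of_int n\<bar>) powr (-\<beta>))\<^sup>2)) UNIV
        \<le> infsum (\<lambda>n. ennreal (\<phi> (n - n0)) + ennreal (\<phi> (n - n1))) UNIV"
      using pt by (intro einf_mono) auto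
    also have "\<dots> = infsum (\<lambda>n. ennreal (\<phi> (n - n0))) UNIV + infsum (\<lambda>n. ennreal (\<phi> (n - n1))) UNIV"
      by (rule infsum_add) auto
    also have "infsum (\<lambda>n. ennreal (\<phi> (n - n0))) UNIV = infsum (\<lambda>n. ennreal (\<phi> n)) UNIV"
      using infsum_reindex_bij_betw[OF int_shift_bij2[of "-n0"], of "\<lambda>n. ennreal (\<phi> n)"] by simp
    also have "infsum (\<lambda>n. ennreal (\<phi> (n - n1))) UNIV = infsum (\<lambda>n. ennreal (\<phi> n)) UNIV"
      using infsum_reindex_bij_betw[OF int_shift_bij2[of "-n1"], of "\<lambda>n. ennreal (\<phi> n)"] by simp
    finally show ?thesis unfolding B0_def by (simp add: mult_2)
  qed
  show ?thesis using B0 main by blast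
qed



definition esq :: "ennreal \<Rightarrow> ennreal" where
  "esq t = (if t = \<infinity> then \<infinity> else ennreal (sqrt (enn2real t)))"

lemma esq_sq: "(esq t)\<^sup>2 = t"
proof (cases t)
  case (real r)
  then show ?thesis unfolding esq_def
    using ennreal_power[of "sqrt r" 2] by simp
next
  case top
  then show ?thesis unfolding esq_def by simp
qed

lemma esq_sq_le:
  fixes p q :: ennreal
  assumes "p\<^sup>2 \<le> q\<^sup>2"
  shows "p \<le> q"
proof (cases q)
  case top then show ?thesis by simp
next
  case (real y)
  note qy = real
  show ?thesis
  proof (cases p)
    case top
    have "(ennreal y)\<^sup>2 = ennreal (y\<^sup>2)" using qy(1) by (rule ennreal_power)
    then show ?thesis using assms qy top by (simp add: top_unique)
  next
    case (real x)
    have "ennreal (x\<^sup>2) \<le> ennreal (y\<^sup>2)" using assms real(2) qy(2) ennreal_power[OF real(1), of 2] ennreal_power[OF qy(1), of 2] by simp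
    then have "x\<^sup>2 \<le> y\<^sup>2" using qy by (simp add: ennreal_le_iff)
    then have "x \<le> y" using qy(1) by (rule power2_le_imp_le)
    then show ?thesis using real qy by (simp add: ennreal_leI)
  qed
qed

lemma esq_mult: "esq a * esq b = esq (a * b)"
proof -
  have "(esq (a * b))\<^sup>2 \<le> (esq a * esq b)\<^sup>2" "(esq a * esq b)\<^sup>2 \<le> (esq (a * b))\<^sup>2"
    by (simp_all add: power_mult_distrib esq_sq)
  then show ?thesis using esq_sq_le by (metis antisym)
qed

lemma ecs_sqrt:
  fixes f g :: "'a \<Rightarrow> ennreal"
  shows "infsum (\<lambda>x. f x * g x) A \<le> esq (infsum (\<lambda>x. (f x)\<^sup>2) A) * esq (infsum (\<lambda>x. (g x)\<^sup>2) A)"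
  by (rule esq_sq_le) (simp add: power_mult_distrib esq_sq ecs)

lemma esq_mono_sq:
  fixes a b :: ennreal
  assumes "a \<le> b" shows "a\<^sup>2 \<le> b\<^sup>2"
  using assms unfolding power2_eq_square by (intro mult_mono) auto

lemma cmod_infsum_le:
  fixes f :: "'a \<Rightarrow> complex"
  shows "ennreal (cmod (infsum f A)) \<le> infsum (\<lambda>x. ennreal (cmod (f x))) A"
proof (cases "f summable_on A")
  case True
  then have abs: "(\<lambda>x. cmod (f x)) summable_on A"
    using summable_on_iff_abs_summable_on_complex by blast
  have "cmod (infsum f A) \<le> infsum (\<lambda>x. cmod (f x)) A"
    using abs by (rule norm_infsum_bound)
  then have "ennreal (cmod (infsum f A)) \<le> ennreal (infsum (\<lambda>x. cmod (f x)) A)"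
    by (rule ennreal_leI)
  also have "\<dots> = infsum (\<lambda>x. ennreal (cmod (f x))) A"
    using abs by (simp add: ennreal_infsum)
  finally show ?thesis .
next
  case False
  then show ?thesis by (simp add: infsum_not_exists)
qed

lemma Gw:
  assumes "adot N \<alpha> k \<noteq> 0"
  shows "Gweight N \<alpha> \<sigma> 0 k = wt \<sigma> N k"
  using assms unfolding Gweight_def wt_def by simp

lemma GsqE_eq:
  assumes nonres: "\<forall>k\<in>Zdot N. adot N \<alpha> k \<noteq> 0"
  shows "GsqE N \<alpha> \<sigma> 0 g = infsum (\<lambda>k. ennreal (wt \<sigma> N k) * (g k)\<^sup>2) (Zdot N)"
  unfolding GsqE_def using nonres by (intro infsum_cong) (simp add: Gw)

lemma Gsq_eq:
  assumes nonres: "\<forall>k\<in>Zdot N. adot N \<alpha> k \<noteq> 0"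
  shows "Gsq N \<alpha> \<sigma> 0 u = infsum (\<lambda>k. ennreal (wt \<sigma> N k) * (ennreal (cmod (u k)))\<^sup>2) (Zdot N)"
  unfolding Gsq_def using GsqE_eq[OF nonres] .

lemma wt_nonneg: "wt \<sigma> N k \<ge> 0"
  unfolding wt_def by (intro prod_nonneg) simp

lemma diff_in_Zdot: "k \<in> Zdot N \<Longrightarrow> k' \<in> Zdot N \<Longrightarrow> k' \<noteq> k \<Longrightarrow> k - k' \<in> Zdot N"
  unfolding Zdot_def by (auto simp: fun_eq_iff) (metis)

lemma c0_nonneg: "(\<Prod>j<N. 4 powr (\<sigma> j :: real)) \<ge> 0"
  by (intro prod_nonneg) simp

lemma diff_plus: "(\<lambda>j. (k - k') j + k' j) = (k :: nat \<Rightarrow> int)"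
  by (simp add: fun_eq_iff)

lemma prod_fin:
  fixes f :: "nat \<Rightarrow> ennreal"
  assumes "\<And>j. j \<in> A \<Longrightarrow> f j < \<infinity>"
  shows "(\<Prod>j\<in>A. f j) < \<infinity>"
proof -
  have "\<forall>j\<in>A. f j \<noteq> top" using assms by (simp add: less_top)
  then have "(\<Prod>j\<in>A. f j) \<noteq> top" by (simp add: ennreal_prod_eq_top)
  then show ?thesis by (simp add: less_top)
qed

lemma P1:
  assumes nonres: "\<forall>k\<in>Zdot N. adot N \<alpha> k \<noteq> 0" and \<sigma>: "\<forall>j<N. \<sigma> j > 1/2"
  shows "\<exists>C::real. \<forall>u v. Gsq N \<alpha> \<sigma> 0 (Gprod N u v) \<le> ennreal C * Gsq N \<alpha> \<sigma> 0 u * Gsq N \<alpha> \<sigma> 0 v"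
proof -
  define B where "B = (\<Prod>j<N. 2 * Zs (\<sigma> j))"
  define c0 where "c0 = (\<Prod>j<N. 4 powr (\<sigma> j))"
  have Bfin: "B < \<infinity>" unfolding B_def
    using \<sigma> Zs_fin by (intro prod_fin) (simp add: ennreal_mult_less_top)
  define C where "C = enn2real B * c0"
  have c0nn: "c0 \<ge> 0" unfolding c0_def by (rule c0_nonneg)
  have CB: "ennreal C = B * ennreal c0"
    unfolding C_def using Bfin c0nn by (simp add: ennreal_mult)
  show ?thesis
  proof (intro exI allI)
    fix u v :: "(nat \<Rightarrow> int) \<Rightarrow> complex"
    let ?U = "\<lambda>x. ennreal (cmod (u x))"
    let ?V = "\<lambda>x. ennreal (cmod (v x))"
    have "Gsq N \<alpha> \<sigma> 0 (Gprod N u v) = infsum (\<lambda>k. ennreal (wt \<sigma> N k) * (ennreal (cmod (Gprod N u v k)))\<^sup>2) (Zdot N)"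
      by (rule Gsq_eq[OF nonres])
    also have "\<dots> \<le> infsum (\<lambda>k. ennreal (wt \<sigma> N k) * (infsum (\<lambda>k'. ennreal 1 * ?U (k - k') * ?V k') (Zdot N - {k}))\<^sup>2) (Zdot N)"
    proof (intro einf_mono mult_left_mono esq_mono_sq)
      fix k
      have "ennreal (cmod (Gprod N u v k)) \<le> infsum (\<lambda>k'. ennreal (cmod (u (k - k') * v k'))) (Zdot N - {k})"
        unfolding Gprod_def by (rule cmod_infsum_le)
      also have "\<dots> = infsum (\<lambda>k'. ennreal 1 * ?U (k - k') * ?V k') (Zdot N - {k})"
        by (intro infsum_cong) (simp add: norm_mult ennreal_mult)
      finally show "ennreal (cmod (Gprod N u v k)) \<le> infsum (\<lambda>k'. ennreal 1 * ?U (k - k') * ?V k') (Zdot N - {k})" .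
    qed simp
    also have "\<dots> \<le> B * ennreal c0 * infsum (\<lambda>x. ennreal (wt \<sigma> N x) * (?U x)\<^sup>2) (Zdot N) * infsum (\<lambda>x. ennreal (wt \<sigma> N x) * (?V x)\<^sup>2) (Zdot N)"
    proof (rule AL[where K = "Zdot N" and J = "\<lambda>k. Zdot N - {k}" and a = "\<lambda>k k'. k - k'" and b = "\<lambda>k k'. k'"
          and w = "wt \<sigma> N" and Wa = "wt \<sigma> N" and Wb = "wt \<sigma> N" and Q = "Qf \<sigma> N" and m = "\<lambda>k k'. 1"
          and U = ?U and V = ?V and B = B and c = c0 and X = "Zdot N" and Y = "Zdot N"])
      show "inj_on (\<lambda>(k, j). (k - j, j)) (SIGMA k:Zdot N. Zdot N - {k})"
        by (auto simp: inj_on_def fun_eq_iff)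
      fix k j assume k: "k \<in> Zdot N" and j: "j \<in> Zdot N - {k}"
      show "k - j \<in> Zdot N \<and> j \<in> Zdot N" using k j diff_in_Zdot by auto
      show "0 < Qf \<sigma> N (k - j) j" by (rule Qf_pos)
      show "wt \<sigma> N k \<le> c0 * Qf \<sigma> N (k - j) j * wt \<sigma> N (k - j) * wt \<sigma> N j"
        using wt_ineq[of N \<sigma> "k - j" j] \<sigma> unfolding diff_plus c0_def by force
    next
      fix k assume k: "k \<in> Zdot N"
      show "infsum (\<lambda>j. ennreal (1 ^ 2 * Qf \<sigma> N (k - j) j)) (Zdot N - {k}) \<le> B"
        unfolding B_def using QB_i by simp
    qed (auto simp: wt_nonneg c0_def intro: prod_nonneg)
    also have "\<dots> = ennreal C * Gsq N \<alpha> \<sigma> 0 u * Gsq N \<alpha> \<sigma> 0 v"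
      unfolding CB Gsq_eq[OF nonres] ..
    finally show "Gsq N \<alpha> \<sigma> 0 (Gprod N u v) \<le> ennreal C * Gsq N \<alpha> \<sigma> 0 u * Gsq N \<alpha> \<sigma> 0 v" .
  qed
qed

lemma wt_0:
  assumes "\<sigma> 0 = 0" "N \<ge> 1"
  shows "wt \<sigma> N (k(0 := n)) = wt \<sigma> N k"
proof -
  have ins: "{..<N} = insert 0 {1..<N}" using assms(2) by auto
  have A: "(\<Prod>j\<in>{1..<N}. jbr (of_int ((k(0:=n)) j)) powr (2 * \<sigma> j)) = (\<Prod>j\<in>{1..<N}. jbr (of_int (k j)) powr (2 * \<sigma> j))"
    by (intro prod.cong) auto
  show ?thesis unfolding wt_def ins using assms(1) A by simp
qed

lemma Qf_shift:
  assumes "\<sigma> 0 = 0" "N \<ge> 1"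
  shows "Qf \<sigma> N (k - r(0 := n)) (r(0 := n)) = Qf \<sigma> N (k - r) r"
proof -
  have "(\<Prod>j\<in>{1..<N}. qq (\<sigma> j) ((k - r(0 := n)) j) ((r(0 := n)) j)) = (\<Prod>j\<in>{1..<N}. qq (\<sigma> j) ((k - r) j) (r j))"
    by (intro prod.cong) auto
  then show ?thesis using Qf_0[of \<sigma> N, OF assms] by simp
qed

lemma adot_split:
  assumes "N \<ge> 1"
  shows "adot N \<alpha> k = adot N \<alpha> (k(0 := 0)) + \<alpha> 0 * of_int (k 0)"
proof -
  have "adot N \<alpha> ((k(0 := 0))(0 := k 0)) = adot N \<alpha> (k(0 := 0)) + \<alpha> 0 * of_int (k 0)"
    using assms by (intro adot_upd0) auto
  then show ?thesis by simp
qed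

lemma bad_inj:
  assumes N: "N \<ge> 1" and d: "\<alpha> 0 \<noteq> 0"
    and k1: "\<bar>adot N \<alpha> k1\<bar> < \<bar>\<alpha> 0\<bar> / 2" and k2: "\<bar>adot N \<alpha> k2\<bar> < \<bar>\<alpha> 0\<bar> / 2"
    and e: "k1(0 := 0) = k2(0 := 0)"
  shows "k1 = k2"
proof -
  have "adot N \<alpha> k1 - adot N \<alpha> k2 = \<alpha> 0 * of_int (k1 0 - k2 0)"
    using adot_split[OF N, of \<alpha> k1] adot_split[OF N, of \<alpha> k2] e by (simp add: algebra_simps)
  then have "\<bar>\<alpha> 0\<bar> * \<bar>of_int (k1 0 - k2 0)\<bar> < \<bar>\<alpha> 0\<bar> * 1"
    using k1 k2 by (simp add: abs_mult[symmetric])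
  then have "\<bar>of_int (k1 0 - k2 0) :: real\<bar> < 1" using d by simp
  then have "k1 0 = k2 0" by linarith
  then show ?thesis using e by (metis fun_upd_triv fun_upd_upd)
qed

lemma GB:
  assumes N: "N \<ge> 1" and s0: "\<sigma> 0 = 0"
    and HB: "\<forall>a c. \<bar>a\<bar> \<ge> \<delta> \<longrightarrow> infsum (\<lambda>n::int. ennreal ((jbr (\<bar>a\<bar> * \<bar>a - (c + \<alpha> 0 * of_int n)\<bar> * \<bar>c + \<alpha> 0 * of_int n\<bar>) powr (-\<beta>))\<^sup>2)) UNIV \<le> Bz"
    and k: "\<bar>adot N \<alpha> k\<bar> \<ge> \<delta>"
  shows "infsum (\<lambda>j. ennreal ((jbr (\<bar>adot N \<alpha> k\<bar> * \<bar>adot N \<alpha> (k - j)\<bar> * \<bar>adot N \<alpha> j\<bar>) powr (-\<beta>)) ^ 2 * Qf \<sigma> N (k - j) j)) (Zdot N - {k})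
     \<le> 2 * (\<Prod>j\<in>{1..<N}. 2 * Zs (\<sigma> j)) * Bz"
proof -
  define G where "G = (\<lambda>j. ennreal ((jbr (\<bar>adot N \<alpha> k\<bar> * \<bar>adot N \<alpha> (k - j)\<bar> * \<bar>adot N \<alpha> j\<bar>) powr (-\<beta>)) ^ 2 * Qf \<sigma> N (k - j) j))"
  have "infsum G (Zdot N - {k}) \<le> infsum G (Zf N)"
    using Zdot_sub by (intro einf_subset) auto
  also have "\<dots> = infsum (\<lambda>r. infsum (\<lambda>n. G (r(0 := n))) UNIV) (R0 N)"
    using N by (rule DL)
  also have "\<dots> \<le> infsum (\<lambda>r. ennreal (Qf \<sigma> N (k - r) r) * Bz) (R0 N)"
  proof (rule einf_mono)
    fix r assume r: "r \<in> R0 N"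
    have r0: "r 0 = 0" using r by (simp add: R0_def)
    have "infsum (\<lambda>n. G (r(0 := n))) UNIV = infsum (\<lambda>n. ennreal (Qf \<sigma> N (k - r) r) * ennreal ((jbr (\<bar>adot N \<alpha> k\<bar> * \<bar>adot N \<alpha> k - (adot N \<alpha> r + \<alpha> 0 * of_int n)\<bar> * \<bar>adot N \<alpha> r + \<alpha> 0 * of_int n\<bar>) powr (-\<beta>))\<^sup>2)) UNIV"
    proof (rule infsum_cong)
      fix n :: int
      have e1: "adot N \<alpha> (r(0 := n)) = adot N \<alpha> r + \<alpha> 0 * of_int n" using adot_upd0[where r=r and N=N and \<alpha>=\<alpha> and n=n, OF r0 N] .
      show "G (r(0 := n)) = ennreal (Qf \<sigma> N (k - r) r) * ennreal ((jbr (\<bar>adot N \<alpha> k\<bar> * \<bar>adot N \<alpha> k - (adot N \<alpha> r + \<alpha> 0 * of_int n)\<bar> * \<bar>adot N \<alpha> r + \<alpha> 0 * of_int n\<bar>) powr (-\<beta>))\<^sup>2)"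
        unfolding G_def Qf_shift[where \<sigma>=\<sigma> and N=N, OF s0 N] adot_diff e1
        by (simp add: ennreal_mult[symmetric] Qf_nonneg mult.commute)
    qed
    also have "\<dots> = ennreal (Qf \<sigma> N (k - r) r) * infsum (\<lambda>n. ennreal ((jbr (\<bar>adot N \<alpha> k\<bar> * \<bar>adot N \<alpha> k - (adot N \<alpha> r + \<alpha> 0 * of_int n)\<bar> * \<bar>adot N \<alpha> r + \<alpha> 0 * of_int n\<bar>) powr (-\<beta>))\<^sup>2)) UNIV"
      by (rule einf_cmult_right)
    also have "\<dots> \<le> ennreal (Qf \<sigma> N (k - r) r) * Bz"
      using HB k by (intro mult_left_mono) auto
    finally show "infsum (\<lambda>n. G (r(0 := n))) UNIV \<le> ennreal (Qf \<sigma> N (k - r) r) * Bz" .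
  qed
  also have "\<dots> = infsum (\<lambda>r. ennreal (Qf \<sigma> N (k - r) r)) (R0 N) * Bz"
    by (rule einf_cmult_left)
  also have "\<dots> \<le> 2 * (\<Prod>j\<in>{1..<N}. 2 * Zs (\<sigma> j)) * Bz"
    using QB_R[where \<sigma>=\<sigma> and N=N and k=k, OF s0 N] by (intro mult_right_mono) auto
  finally show ?thesis unfolding G_def .
qed

definition Ue :: "nat \<Rightarrow> ((nat \<Rightarrow> int) \<Rightarrow> complex) \<Rightarrow> (nat \<Rightarrow> int) \<Rightarrow> ennreal" where
  "Ue N u x = (if x \<in> Zdot N then ennreal (cmod (u x)) else 0)"

definition Uh :: "nat \<Rightarrow> ((nat \<Rightarrow> int) \<Rightarrow> complex) \<Rightarrow> (nat \<Rightarrow> int) \<Rightarrow> ennreal" where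
  "Uh N u s = esq (infsum (\<lambda>n. (Ue N u (s(0 := n)))\<^sup>2) UNIV)"

lemma jbr_powr_le1: "\<beta> \<ge> 0 \<Longrightarrow> jbr x powr (-\<beta>) \<le> 1"
  using powr_mono2'[of "-\<beta>" 1 "jbr x"] jbr_ge1[of x] by simp

lemma BBk:
  assumes N: "N \<ge> 1" and \<beta>: "\<beta> \<ge> 0" and k: "k \<in> Zdot N"
  shows "infsum (\<lambda>k'. ennreal (jbr (\<bar>adot N \<alpha> k\<bar> * \<bar>adot N \<alpha> (k - k')\<bar> * \<bar>adot N \<alpha> k'\<bar>) powr (-\<beta>) * cmod (u (k - k')) * cmod (v k'))) (Zdot N - {k})
    \<le> infsum (\<lambda>r. ennreal 1 * Uh N u (k(0 := 0) - r) * Uh N v r) (R0 N)"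
proof -
  have "infsum (\<lambda>k'. ennreal (jbr (\<bar>adot N \<alpha> k\<bar> * \<bar>adot N \<alpha> (k - k')\<bar> * \<bar>adot N \<alpha> k'\<bar>) powr (-\<beta>) * cmod (u (k - k')) * cmod (v k'))) (Zdot N - {k})
      \<le> infsum (\<lambda>k'. Ue N u (k - k') * Ue N v k') (Zf N)"
  proof (rule einf_mono_neutral)
    show "Zdot N - {k} \<subseteq> Zf N" using Zdot_sub by auto
    fix k' assume k': "k' \<in> Zdot N - {k}"
    have in1: "k - k' \<in> Zdot N" using k k' diff_in_Zdot by auto
    have "ennreal (jbr (\<bar>adot N \<alpha> k\<bar> * \<bar>adot N \<alpha> (k - k')\<bar> * \<bar>adot N \<alpha> k'\<bar>) powr (-\<beta>) * cmod (u (k - k')) * cmod (v k'))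
        \<le> ennreal (1 * cmod (u (k - k')) * cmod (v k'))"
      using jbr_powr_le1[OF \<beta>] by (intro ennreal_leI mult_right_mono) auto
    also have "\<dots> = Ue N u (k - k') * Ue N v k'"
      using in1 k' by (simp add: Ue_def ennreal_mult)
    finally show "ennreal (jbr (\<bar>adot N \<alpha> k\<bar> * \<bar>adot N \<alpha> (k - k')\<bar> * \<bar>adot N \<alpha> k'\<bar>) powr (-\<beta>) * cmod (u (k - k')) * cmod (v k'))
        \<le> Ue N u (k - k') * Ue N v k'" .
  qed
  also have "\<dots> = infsum (\<lambda>r. infsum (\<lambda>n. Ue N u (k - r(0 := n)) * Ue N v (r(0 := n))) UNIV) (R0 N)"
    using N by (rule DL)
  also have "\<dots> \<le> infsum (\<lambda>r. ennreal 1 * Uh N u (k(0 := 0) - r) * Uh N v r) (R0 N)"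
  proof (rule einf_mono)
    fix r assume r: "r \<in> R0 N"
    have r0: "r 0 = 0" using r by (simp add: R0_def)
    have "infsum (\<lambda>n. Ue N u (k - r(0 := n)) * Ue N v (r(0 := n))) UNIV
        \<le> esq (infsum (\<lambda>n. (Ue N u (k - r(0 := n)))\<^sup>2) UNIV) * esq (infsum (\<lambda>n. (Ue N v (r(0 := n)))\<^sup>2) UNIV)"
      by (rule ecs_sqrt)
    also have "infsum (\<lambda>n. (Ue N u (k - r(0 := n)))\<^sup>2) UNIV = infsum (\<lambda>n. (Ue N u ((k(0 := 0) - r)(0 := n)))\<^sup>2) UNIV"
    proof -
      have eq: "k - r(0 := n) = (k(0 := 0) - r)(0 := k 0 - n)" for n
        using r0 by (auto simp: fun_eq_iff)
      show ?thesis unfolding eq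
        using infsum_reindex_bij_betw[OF int_shift_bij[of "k 0"], of "\<lambda>m. (Ue N u ((k(0 := 0) - r)(0 := m)))\<^sup>2"] by simp
    qed
    finally show "infsum (\<lambda>n. Ue N u (k - r(0 := n)) * Ue N v (r(0 := n))) UNIV \<le> ennreal 1 * Uh N u (k(0 := 0) - r) * Uh N v r"
      unfolding Uh_def ennreal_1 mult_1 .
  qed
  finally show ?thesis .
qed

lemma NE:
  assumes s0: "\<sigma> 0 = 0" and N: "N \<ge> 1"
  shows "infsum (\<lambda>r. ennreal (wt \<sigma> N r) * (Uh N u r)\<^sup>2) (R0 N) = infsum (\<lambda>k. ennreal (wt \<sigma> N k) * (ennreal (cmod (u k)))\<^sup>2) (Zdot N)"
proof -
  have "infsum (\<lambda>r. ennreal (wt \<sigma> N r) * (Uh N u r)\<^sup>2) (R0 N)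
      = infsum (\<lambda>r. infsum (\<lambda>n. ennreal (wt \<sigma> N (r(0 := n))) * (Ue N u (r(0 := n)))\<^sup>2) UNIV) (R0 N)"
  proof (rule infsum_cong)
    fix r
    show "ennreal (wt \<sigma> N r) * (Uh N u r)\<^sup>2 = infsum (\<lambda>n. ennreal (wt \<sigma> N (r(0 := n))) * (Ue N u (r(0 := n)))\<^sup>2) UNIV"
      unfolding Uh_def esq_sq wt_0[where \<sigma>=\<sigma> and N=N, OF s0 N] by (rule einf_cmult_right[symmetric])
  qed
  also have "\<dots> = infsum (\<lambda>k. ennreal (wt \<sigma> N k) * (Ue N u k)\<^sup>2) (Zf N)"
    using N by (rule DL[symmetric])
  also have "\<dots> = infsum (\<lambda>k. ennreal (wt \<sigma> N k) * (ennreal (cmod (u k)))\<^sup>2) (Zdot N)"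
    using Zdot_sub by (intro infsum_cong_neutral) (auto simp: Ue_def)
  finally show ?thesis .
qed

lemma alpha0:
  assumes N: "N \<ge> 1" and nonres: "\<forall>k\<in>Zdot N. adot N \<alpha> k \<noteq> 0"
  shows "\<alpha> 0 \<noteq> 0"
proof -
  define e where "e = (\<lambda>j::nat. if j = 0 then (1::int) else 0)"
  have "e \<in> Zdot N" using N unfolding Zdot_def e_def by (auto simp: fun_eq_iff)
  moreover have "adot N \<alpha> e = \<alpha> 0"
    unfolding adot_def e_def using N by (simp add: if_distrib sum.delta cong: if_cong)
  ultimately show ?thesis using nonres by metis
qed

lemma P2:
  assumes N: "N \<ge> 1" and nonres: "\<forall>k\<in>Zdot N. adot N \<alpha> k \<noteq> 0"
    and s0: "\<sigma> 0 = 0" and \<sigma>: "\<forall>j. 1 \<le> j \<and> j < N \<longrightarrow> \<sigma> j > 1/2" and \<beta>: "\<beta> > 1/4"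
  shows "\<exists>C::real. \<forall>u v. GsqE N \<alpha> \<sigma> 0
            (\<lambda>k. \<Sum>\<^sub>\<infinity> k'\<in>Zdot N - {k}.
                 ennreal (jbr (\<bar>adot N \<alpha> k\<bar> * \<bar>adot N \<alpha> (k - k')\<bar> * \<bar>adot N \<alpha> k'\<bar>) powr (- \<beta>)
                          * cmod (u (k - k')) * cmod (v k')))
          \<le> ennreal C * Gsq N \<alpha> \<sigma> 0 u * Gsq N \<alpha> \<sigma> 0 v"
proof -
  have d: "\<alpha> 0 \<noteq> 0" using alpha0[OF N nonres] .
  define \<delta> where "\<delta> = \<bar>\<alpha> 0\<bar> / 2"
  have \<delta>: "\<delta> > 0" unfolding \<delta>_def using d by simp
  obtain B0 where B0f: "B0 < \<infinity>" and B0: "\<forall>a c. \<bar>a\<bar> \<ge> \<delta> \<longrightarrow> infsum (\<lambda>n::int. ennreal ((jbr (\<bar>a\<bar> * \<bar>a - (c + \<alpha> 0 * of_int n)\<bar> * \<bar>c + \<alpha> 0 * of_int n\<bar>) powr (-\<beta>))\<^sup>2)) UNIV \<le> B0"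
    using OneD[OF d \<delta> \<beta>] by blast
  define BR where "BR = 2 * (\<Prod>j\<in>{1..<N}. 2 * Zs (\<sigma> j))"
  have "(\<Prod>j\<in>{1..<N}. 2 * Zs (\<sigma> j)) < \<infinity>"
    using \<sigma> Zs_fin by (intro prod_fin) (simp add: ennreal_mult_less_top)
  then have BRf: "BR < \<infinity>" unfolding BR_def by (simp add: ennreal_mult_less_top)
  define c0 where "c0 = (\<Prod>j<N. 4 powr (\<sigma> j))"
  have c0nn: "c0 \<ge> 0" unfolding c0_def by (rule c0_nonneg)
  have \<sigma>nn: "\<And>j. j < N \<Longrightarrow> \<sigma> j \<ge> 0" using \<sigma> s0
    by (metis less_one not_less less_eq_real_def order_less_trans zero_less_divide_1_iff zero_less_numeral)
  define C where "C = enn2real (BR * B0) * c0 + enn2real BR * c0"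
  have CB: "ennreal C = BR * B0 * ennreal c0 + BR * ennreal c0"
  proof -
    have "BR * B0 < \<infinity>" using BRf B0f by (simp add: ennreal_mult_less_top)
    then have e1: "ennreal (enn2real (BR * B0) * c0) = BR * B0 * ennreal c0"
      using c0nn by (simp add: ennreal_mult)
    have e2: "ennreal (enn2real BR * c0) = BR * ennreal c0"
      using BRf c0nn by (simp add: ennreal_mult)
    have "ennreal C = ennreal (enn2real (BR * B0) * c0) + ennreal (enn2real BR * c0)"
      unfolding C_def using c0nn by (intro ennreal_plus) auto
    then show ?thesis unfolding e1 e2 .
  qed
  show ?thesis
  proof (intro exI allI)
    fix u v :: "(nat \<Rightarrow> int) \<Rightarrow> complex"
    let ?U = "\<lambda>x. ennreal (cmod (u x))"
    let ?V = "\<lambda>x. ennreal (cmod (v x))"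
    let ?m = "\<lambda>k k'. jbr (\<bar>adot N \<alpha> k\<bar> * \<bar>adot N \<alpha> (k - k')\<bar> * \<bar>adot N \<alpha> k'\<bar>) powr (- \<beta>)"
    define F where "F = (\<lambda>k. \<Sum>\<^sub>\<infinity> k'\<in>Zdot N - {k}.
                 ennreal (jbr (\<bar>adot N \<alpha> k\<bar> * \<bar>adot N \<alpha> (k - k')\<bar> * \<bar>adot N \<alpha> k'\<bar>) powr (- \<beta>)
                          * cmod (u (k - k')) * cmod (v k')))"
    define good where "good = {k \<in> Zdot N. \<bar>adot N \<alpha> k\<bar> \<ge> \<delta>}"
    define bad where "bad = {k \<in> Zdot N. \<bar>adot N \<alpha> k\<bar> < \<delta>}"
    let ?GU = "infsum (\<lambda>x. ennreal (wt \<sigma> N x) * (?U x)\<^sup>2) (Zdot N)"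
    let ?GV = "infsum (\<lambda>x. ennreal (wt \<sigma> N x) * (?V x)\<^sup>2) (Zdot N)"
    have split: "Zdot N = good \<union> bad" "good \<inter> bad = {}" unfolding good_def bad_def by auto
    have "GsqE N \<alpha> \<sigma> 0 F = infsum (\<lambda>k. ennreal (wt \<sigma> N k) * (F k)\<^sup>2) (Zdot N)"
      by (rule GsqE_eq[OF nonres])
    also have "\<dots> = infsum (\<lambda>k. ennreal (wt \<sigma> N k) * (F k)\<^sup>2) good + infsum (\<lambda>k. ennreal (wt \<sigma> N k) * (F k)\<^sup>2) bad"
      unfolding split(1) using split(2) by (intro infsum_Un_disjoint) auto
    also have "infsum (\<lambda>k. ennreal (wt \<sigma> N k) * (F k)\<^sup>2) good \<le> BR * B0 * ennreal c0 * ?GU * ?GV"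
    proof -
      have "infsum (\<lambda>k. ennreal (wt \<sigma> N k) * (F k)\<^sup>2) good
          = infsum (\<lambda>k. ennreal (wt \<sigma> N k) * (infsum (\<lambda>k'. ennreal (?m k k') * ?U (k - k') * ?V k') (Zdot N - {k}))\<^sup>2) good"
        unfolding F_def by (intro infsum_cong arg_cong2[where f = "(*)"] refl arg_cong[where f = "\<lambda>x. x\<^sup>2"]) (simp add: ennreal_mult)
      also have "\<dots> \<le> BR * B0 * ennreal c0 * ?GU * ?GV"
      proof (rule AL[where K = good and J = "\<lambda>k. Zdot N - {k}" and a = "\<lambda>k k'. k - k'" and b = "\<lambda>k k'. k'"
          and w = "wt \<sigma> N" and Wa = "wt \<sigma> N" and Wb = "wt \<sigma> N" and Q = "Qf \<sigma> N" and m = ?m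
          and U = ?U and V = ?V and B = "BR * B0" and c = c0 and X = "Zdot N" and Y = "Zdot N"])
        show "inj_on (\<lambda>(k, j). (k - j, j)) (SIGMA k:good. Zdot N - {k})"
          by (auto simp: inj_on_def fun_eq_iff)
        fix k j assume k: "k \<in> good" and j: "j \<in> Zdot N - {k}"
        show "k - j \<in> Zdot N \<and> j \<in> Zdot N" using k j diff_in_Zdot by (auto simp: good_def)
        show "0 < Qf \<sigma> N (k - j) j" by (rule Qf_pos)
        show "wt \<sigma> N k \<le> c0 * Qf \<sigma> N (k - j) j * wt \<sigma> N (k - j) * wt \<sigma> N j"
          using wt_ineq[of N \<sigma> "k - j" j] \<sigma>nn unfolding diff_plus c0_def by force
      next
        fix k assume k: "k \<in> good"
        show "infsum (\<lambda>j. ennreal ((?m k j)\<^sup>2 * Qf \<sigma> N (k - j) j)) (Zdot N - {k}) \<le> BR * B0"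
          unfolding BR_def using GB[where N=N and \<sigma>=\<sigma> and \<delta>=\<delta> and \<alpha>=\<alpha> and \<beta>=\<beta> and Bz=B0 and k=k, OF N s0 B0] k by (simp add: good_def)
      qed (auto simp: wt_nonneg c0nn)
      finally show ?thesis .
    qed
    also have "infsum (\<lambda>k. ennreal (wt \<sigma> N k) * (F k)\<^sup>2) bad \<le> BR * ennreal c0 * ?GU * ?GV"
    proof -
      have "infsum (\<lambda>k. ennreal (wt \<sigma> N k) * (F k)\<^sup>2) bad
          \<le> infsum (\<lambda>k. ennreal (wt \<sigma> N k) * (infsum (\<lambda>r. ennreal 1 * Uh N u (k(0 := 0) - r) * Uh N v r) (R0 N))\<^sup>2) bad"
      proof (intro einf_mono mult_left_mono esq_mono_sq)
        fix k assume k: "k \<in> bad"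
        show "F k \<le> infsum (\<lambda>r. ennreal 1 * Uh N u (k(0 := 0) - r) * Uh N v r) (R0 N)"
          unfolding F_def using \<beta> k by (intro BBk[OF N]) (auto simp: bad_def)
      qed simp
      also have "\<dots> \<le> BR * ennreal c0 * infsum (\<lambda>r. ennreal (wt \<sigma> N r) * (Uh N u r)\<^sup>2) (R0 N) * infsum (\<lambda>r. ennreal (wt \<sigma> N r) * (Uh N v r)\<^sup>2) (R0 N)"
      proof (rule AL[where K = bad and J = "\<lambda>k. R0 N" and a = "\<lambda>k r. k(0 := 0) - r" and b = "\<lambda>k r. r"
          and w = "wt \<sigma> N" and Wa = "wt \<sigma> N" and Wb = "wt \<sigma> N" and Q = "Qf \<sigma> N" and m = "\<lambda>k r. 1"
          and U = "Uh N u" and V = "Uh N v" and B = BR and c = c0 and X = "R0 N" and Y = "R0 N"])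
        show "inj_on (\<lambda>(k, r). (k(0 := 0) - r, r)) (SIGMA k:bad. R0 N)"
        proof (rule inj_onI)
          fix x y assume x: "x \<in> (SIGMA k:bad. R0 N)" and y: "y \<in> (SIGMA k:bad. R0 N)"
            and e: "(\<lambda>(k, r). (k(0 := 0) - r, r)) x = (\<lambda>(k, r). (k(0 := 0) - r, r)) y"
          obtain k1 r1 where x1: "x = (k1, r1)" by (cases x)
          obtain k2 r2 where y1: "y = (k2, r2)" by (cases y)
          have k1: "k1 \<in> bad" and k2: "k2 \<in> bad" using x y x1 y1 by auto
          have rr: "r1 = r2" and ee: "k1(0 := 0) - r1 = k2(0 := 0) - r2" using e x1 y1 by auto
          have "k1(0 := 0) = k2(0 := 0)" using ee rr by (auto simp: fun_eq_iff)
          then have "k1 = k2" using bad_inj[where N=N and \<alpha>=\<alpha>, OF N d] k1 k2 unfolding bad_def \<delta>_def by blast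
          then show "x = y" using x1 y1 rr by simp
        qed
        fix k r assume k: "k \<in> bad" and r: "r \<in> R0 N"
        show "k(0 := 0) - r \<in> R0 N \<and> r \<in> R0 N" using k r
          by (auto simp: R0_def Zf_def bad_def Zdot_def)
        show "0 < Qf \<sigma> N (k(0 := 0) - r) r" by (rule Qf_pos)
        have "wt \<sigma> N k = wt \<sigma> N (k(0 := 0))" using wt_0[where \<sigma>=\<sigma> and N=N, OF s0 N] by simp
        also have "\<dots> \<le> c0 * Qf \<sigma> N (k(0 := 0) - r) r * wt \<sigma> N (k(0 := 0) - r) * wt \<sigma> N r"
          using wt_ineq[of N \<sigma> "k(0 := 0) - r" r] \<sigma>nn unfolding diff_plus c0_def by force
        finally show "wt \<sigma> N k \<le> c0 * Qf \<sigma> N (k(0 := 0) - r) r * wt \<sigma> N (k(0 := 0) - r) * wt \<sigma> N r" .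
      next
        fix k assume k: "k \<in> bad"
        show "infsum (\<lambda>r. ennreal (1\<^sup>2 * Qf \<sigma> N (k(0 := 0) - r) r)) (R0 N) \<le> BR"
          unfolding BR_def using QB_R[where \<sigma>=\<sigma> and N=N and k="k(0 := 0)", OF s0 N] by simp
      qed (auto simp: wt_nonneg c0nn)
      also have "\<dots> = BR * ennreal c0 * ?GU * ?GV"
        unfolding NE[where \<sigma>=\<sigma> and N=N and u=u, OF s0 N] NE[where \<sigma>=\<sigma> and N=N and u=v, OF s0 N] ..
      finally show ?thesis .
    qed
    also have "BR * B0 * ennreal c0 * ?GU * ?GV + BR * ennreal c0 * ?GU * ?GV = ennreal C * ?GU * ?GV"
      unfolding CB by (simp add: distrib_right)
    also have "\<dots> = ennreal C * Gsq N \<alpha> \<sigma> 0 u * Gsq N \<alpha> \<sigma> 0 v"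
      unfolding Gsq_eq[OF nonres] ..
    finally show "GsqE N \<alpha> \<sigma> 0 F \<le> ennreal C * Gsq N \<alpha> \<sigma> 0 u * Gsq N \<alpha> \<sigma> 0 v"
      by (simp add: add_mono)
  qed
qed


theorem lemma2p2:
  fixes N :: nat and \<alpha> :: "nat \<Rightarrow> real"
  assumes N: "N \<ge> 1"
    and nonres: "\<forall>k\<in>Zdot N. adot N \<alpha> k \<noteq> 0"
  shows
   "(\<forall>\<sigma>. (\<forall>j<N. \<sigma> j > 1/2) \<longrightarrow>
       (\<exists>C::real. \<forall>u v. Gsq N \<alpha> \<sigma> 0 u < \<infinity> \<and> Gsq N \<alpha> \<sigma> 0 v < \<infinity> \<longrightarrow>
          Gsq N \<alpha> \<sigma> 0 (Gprod N u v) \<le> ennreal C * Gsq N \<alpha> \<sigma> 0 u * Gsq N \<alpha> \<sigma> 0 v))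
    \<and>
    (\<forall>\<sigma> (\<beta>::real). \<sigma> 0 = 0 \<and> (\<forall>j. 1 \<le> j \<and> j < N \<longrightarrow> \<sigma> j > 1/2) \<and> \<beta> > 1/4 \<longrightarrow>
       (\<exists>C::real. \<forall>u v. Gsq N \<alpha> \<sigma> 0 u < \<infinity> \<and> Gsq N \<alpha> \<sigma> 0 v < \<infinity> \<longrightarrow>
          GsqE N \<alpha> \<sigma> 0
            (\<lambda>k. \<Sum>\<^sub>\<infinity> k'\<in>Zdot N - {k}.
                 ennreal (jbr (\<bar>adot N \<alpha> k\<bar> * \<bar>adot N \<alpha> (k - k')\<bar> * \<bar>adot N \<alpha> k'\<bar>) powr (- \<beta>)
                          * cmod (u (k - k')) * cmod (v k')))
          \<le> ennreal C * Gsq N \<alpha> \<sigma> 0 u * Gsq N \<alpha> \<sigma> 0 v))"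
proof (intro conjI allI impI)
  fix \<sigma> :: "nat \<Rightarrow> real"
  assume s: "\<forall>j<N. \<sigma> j > 1/2"
  obtain C where C: "\<forall>u v. Gsq N \<alpha> \<sigma> 0 (Gprod N u v) \<le> ennreal C * Gsq N \<alpha> \<sigma> 0 u * Gsq N \<alpha> \<sigma> 0 v"
    using P1[OF nonres s] by blast
  then show "\<exists>C::real. \<forall>u v. Gsq N \<alpha> \<sigma> 0 u < \<infinity> \<and> Gsq N \<alpha> \<sigma> 0 v < \<infinity> \<longrightarrow>
          Gsq N \<alpha> \<sigma> 0 (Gprod N u v) \<le> ennreal C * Gsq N \<alpha> \<sigma> 0 u * Gsq N \<alpha> \<sigma> 0 v"
    by blast
next
  fix \<sigma> :: "nat \<Rightarrow> real" and \<beta> :: real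
  assume h: "\<sigma> 0 = 0 \<and> (\<forall>j. 1 \<le> j \<and> j < N \<longrightarrow> \<sigma> j > 1/2) \<and> \<beta> > 1/4"
  obtain C where C: "\<forall>u v. GsqE N \<alpha> \<sigma> 0
            (\<lambda>k. \<Sum>\<^sub>\<infinity> k'\<in>Zdot N - {k}.
                 ennreal (jbr (\<bar>adot N \<alpha> k\<bar> * \<bar>adot N \<alpha> (k - k')\<bar> * \<bar>adot N \<alpha> k'\<bar>) powr (- \<beta>)
                          * cmod (u (k - k')) * cmod (v k')))
          \<le> ennreal C * Gsq N \<alpha> \<sigma> 0 u * Gsq N \<alpha> \<sigma> 0 v"
    using P2[OF N nonres, of \<sigma> \<beta>] h by blast
  then show "\<exists>C::real. \<forall>u v. Gsq N \<alpha> \<sigma> 0 u < \<infinity> \<and> Gsq N \<alpha> \<sigma> 0 v < \<infinity> \<longrightarrow>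
          GsqE N \<alpha> \<sigma> 0
            (\<lambda>k. \<Sum>\<^sub>\<infinity> k'\<in>Zdot N - {k}.
                 ennreal (jbr (\<bar>adot N \<alpha> k\<bar> * \<bar>adot N \<alpha> (k - k')\<bar> * \<bar>adot N \<alpha> k'\<bar>) powr (- \<beta>)
                          * cmod (u (k - k')) * cmod (v k')))
          \<le> ennreal C * Gsq N \<alpha> \<sigma> 0 u * Gsq N \<alpha> \<sigma> 0 v"
    by blast
qed

end
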